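(* The operator $G:=A^2-\frac{w^2}{2}I$, with domain $\mathsf{D}(A^2)=\{f\in\mathsf{D}(A):Af\in\mathsf{D}(A)\}$, is maximal dissipative on $H$.
   Context: Fix $w>0$ and let $L^2_w:=L^2(\mathbb{R},e^{wx}dx)$. $H=H(\mathbb{R})$ is the Hilbert space of absolutely continuous $f\in L^1_{\mathrm{loc}}(\mathbb{R})$ with $f'\in L^2_w$, with inner product $\langle f,g\rangle:=\lim_{x\to+\infty}f(x)g(x)+\langle f',g'\rangle_{L^2_w}$ (the limit $f(+\infty)$ exists for $f\in H$). $A$ is the generator of the translation semigroup $(S_A(t)f)(x)=f(x+t)$ on $H$, i.e. $Af=f'$ on $\mathsf{D}(A)=\{f\in H: f'\in H\}$. *)

theory Defs
  imports "HOL-Analysis.Analysis"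
begin

definition L2w :: "real \<Rightarrow> (real \<Rightarrow> real) \<Rightarrow> bool" where
  "L2w w g \<longleftrightarrow> g \<in> borel_measurable lborel \<and>
     integrable lborel (\<lambda>x. (g x)\<^sup>2 * exp (w * x))"

text \<open>g is an (a.e.) derivative of the absolutely continuous function f, with g in L^2_w:
  f is the indefinite integral of the locally integrable g.\<close>
definition wderiv :: "real \<Rightarrow> (real \<Rightarrow> real) \<Rightarrow> (real \<Rightarrow> real) \<Rightarrow> bool" where
  "wderiv w f g \<longleftrightarrow> L2w w g \<and>
     (\<forall>a b. a \<le> b \<longrightarrow> set_integrable lborel {a..b} g \<and>
                          f b - f a = (LINT x:{a..b}|lborel. g x))"

definition Hsp :: "real \<Rightarrow> (real \<Rightarrow> real) set" where
  "Hsp w = {f. \<exists>g. wderiv w f g}"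

text \<open>A chosen representative of f'.\<close>
definition dH :: "real \<Rightarrow> (real \<Rightarrow> real) \<Rightarrow> (real \<Rightarrow> real)" where
  "dH w f = (SOME g. wderiv w f g)"

definition Hinner :: "real \<Rightarrow> (real \<Rightarrow> real) \<Rightarrow> (real \<Rightarrow> real) \<Rightarrow> real" where
  "Hinner w f g = Lim at_top (\<lambda>x. f x * g x)
      + (LINT x|lborel. dH w f x * dH w g x * exp (w * x))"

definition DA :: "real \<Rightarrow> (real \<Rightarrow> real) set" where
  "DA w = {f \<in> Hsp w. \<exists>h \<in> Hsp w. wderiv w f h}"

text \<open>A f = f' (the representative in H, i.e. the absolutely continuous one).\<close>
definition Aop :: "real \<Rightarrow> (real \<Rightarrow> real) \<Rightarrow> (real \<Rightarrow> real)" where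
  "Aop w f = (SOME h. h \<in> Hsp w \<and> wderiv w f h)"

definition DA2 :: "real \<Rightarrow> (real \<Rightarrow> real) set" where
  "DA2 w = {f \<in> DA w. Aop w f \<in> DA w}"

definition Gop :: "real \<Rightarrow> (real \<Rightarrow> real) \<Rightarrow> (real \<Rightarrow> real)" where
  "Gop w f = (\<lambda>x. Aop w (Aop w f) x - (w\<^sup>2 / 2) * f x)"

definition maximal_dissipative ::
  "(real \<Rightarrow> real) set \<Rightarrow> ((real \<Rightarrow> real) \<Rightarrow> (real \<Rightarrow> real) \<Rightarrow> real)
   \<Rightarrow> (real \<Rightarrow> real) set \<Rightarrow> ((real \<Rightarrow> real) \<Rightarrow> (real \<Rightarrow> real)) \<Rightarrow> bool" where
  "maximal_dissipative X ip D T \<longleftrightarrow>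
     D \<subseteq> X \<and> (\<forall>f\<in>D. T f \<in> X) \<and> (\<forall>f\<in>D. ip (T f) f \<le> 0) \<and>
     (\<forall>h\<in>X. \<exists>f\<in>D. (\<lambda>x. f x - T f x) = h)"

end

theory Submission
  imports Defs "HOL-Real_Asymp.Real_Asymp"
begin
definition acd :: "(real \<Rightarrow> real) \<Rightarrow> (real \<Rightarrow> real) \<Rightarrow> bool" where
  "acd g F \<longleftrightarrow> (\<forall>a b. a \<le> b \<longrightarrow> set_integrable lborel {a..b} g \<and>
                          F b - F a = (LINT x:{a..b}|lborel. g x))"

lemma wderiv_iff: "wderiv w f g \<longleftrightarrow> L2w w g \<and> acd g f"
  by (simp add: wderiv_def acd_def)

lemma acdD: "acd g F \<Longrightarrow> a \<le> b \<Longrightarrow> set_integrable lborel {a..b} g"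
  "acd g F \<Longrightarrow> a \<le> b \<Longrightarrow> F b - F a = (LINT x:{a..b}|lborel. g x)"
  by (auto simp: acd_def)

lemma acd_add: assumes "acd f F" "acd g G" shows "acd (\<lambda>x. f x + g x) (\<lambda>x. F x + G x)"
  unfolding acd_def
proof (intro allI impI conjI)
  fix a b :: real assume "a \<le> b"
  then show "set_integrable lborel {a..b} (\<lambda>x. f x + g x)" using assms by (auto dest: acdD)
  show "F b + G b - (F a + G a) = (LINT x:{a..b}|lborel. f x + g x)"
    using acdD[OF assms(1) \<open>a \<le> b\<close>] acdD[OF assms(2) \<open>a \<le> b\<close>]
    by (simp add: set_integral_add)
qed

lemma acd_diff: assumes "acd f F" "acd g G" shows "acd (\<lambda>x. f x - g x) (\<lambda>x. F x - G x)"
  unfolding acd_def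
proof (intro allI impI conjI)
  fix a b :: real assume "a \<le> b"
  then show "set_integrable lborel {a..b} (\<lambda>x. f x - g x)" using assms by (auto dest: acdD)
  show "F b - G b - (F a - G a) = (LINT x:{a..b}|lborel. f x - g x)"
    using acdD[OF assms(1) \<open>a \<le> b\<close>] acdD[OF assms(2) \<open>a \<le> b\<close>]
    by (simp add: set_integral_diff)
qed

lemma acd_cmult: "acd f F \<Longrightarrow> acd (\<lambda>x. c * f x) (\<lambda>x. c * F x)"
  unfolding acd_def by (auto simp: set_integrable_mult_right right_diff_distrib[symmetric])

lemma acd_cong: assumes "acd f F" "\<And>x. f x = g x" "\<And>x. F x = G x" shows "acd g G"
proof -
  have "f = g" "F = G" using assms(2,3) by auto
  then show ?thesis using assms(1) by simp
qed

lemma acd_const: "acd (\<lambda>x. 0) (\<lambda>x. c)"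
  unfolding acd_def by (auto simp: set_integrable_def)

lemma acd_C1:
  assumes "\<And>x. (F has_real_derivative f x) (at x)" "continuous_on UNIV f"
  shows "acd f F"
  unfolding acd_def
proof (intro allI impI conjI)
  fix a b :: real assume "a \<le> b"
  have c: "continuous_on {a..b} f" using assms(2) by (rule continuous_on_subset) auto
  show "set_integrable lborel {a..b} f"
    by (rule borel_integrable_atLeastAtMost'[OF c])
  have "(LINT x:{a..b}|lborel. f x) = (\<integral>x. f x * indicator {a .. b} x \<partial>lborel)"
    by (simp add: set_lebesgue_integral_def mult.commute)
  also have "\<dots> = F b - F a"
    using \<open>a \<le> b\<close> assms by (intro integral_FTC_Icc_real) (auto simp: continuous_on_eq_continuous_at)
  finally show "F b - F a = (LINT x:{a..b}|lborel. f x)" by simp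
qed

lemma acd_cont:
  assumes "acd g F"
  shows "continuous_on UNIV F"
proof -
  have "isCont F x0" for x0
  proof -
    let ?a = "x0 - 1" and ?b = "x0 + 1"
    have si: "set_integrable lborel {?a..?b} g" using acdD(1)[OF assms] by simp
    have io: "g integrable_on {?a..?b}" using set_borel_integral_eq_integral(1)[OF si] .
    have "continuous_on {?a..?b} (\<lambda>t. F ?a + integral {?a..t} g)"
      by (intro continuous_intros indefinite_integral_continuous_1[OF io])
    moreover have "F t = F ?a + integral {?a..t} g" if "t \<in> {?a..?b}" for t
    proof -
      have "set_integrable lborel {?a..t} g" using acdD(1)[OF assms] that by simp
      then have "(LINT x:{?a..t}|lborel. g x) = integral {?a..t} g"
        by (rule set_borel_integral_eq_integral(2))
      then show ?thesis using acdD(2)[OF assms, of ?a t] that by simp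
    qed
    ultimately have "continuous_on {?a..?b} F"
      using continuous_on_eq by (metis (no_types, lifting))
    then show ?thesis
      by (rule continuous_on_interior) (auto simp: interior_atLeastAtMost_real)
  qed
  then show ?thesis by (simp add: continuous_on_eq_continuous_at)
qed

lemma acd_measurable: "acd g F \<Longrightarrow> F \<in> borel_measurable borel"
  by (rule borel_measurable_continuous_onI, erule acd_cont)

lemma tri_fubini:
  fixes a b :: "real \<Rightarrow> real"
  assumes ia: "integrable lborel a" and ib: "integrable lborel b"
  shows "(\<integral>x. a x * (\<integral>y. b y * indicator {..x} y \<partial>lborel) \<partial>lborel)
       = (\<integral>y. b y * (\<integral>x. a x * indicator {y..} x \<partial>lborel) \<partial>lborel)"
proof -
  have [measurable]: "a \<in> borel_measurable borel" "b \<in> borel_measurable borel"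
    using ia ib by auto
  define H where "H = (\<lambda>(x::real,y::real). a x * b y * indicator {..x} y)"
  have Hm[measurable]: "H \<in> borel_measurable (lborel \<Otimes>\<^sub>M lborel)"
    unfolding H_def indicator_def atMost_iff by measurable
  have intHx: "integrable lborel (\<lambda>y. H (x, y))" for x
  proof (rule Bochner_Integration.integrable_bound[where f="\<lambda>y. a x * b y"])
    show "integrable lborel (\<lambda>y. a x * b y)" using ib by simp
    have e: "(\<lambda>y. H (x,y)) = (\<lambda>y. a x * b y * indicator {..x} y)" by (simp add: H_def)
    show "(\<lambda>y. H (x,y)) \<in> borel_measurable lborel" unfolding e by measurable
    show "AE y in lborel. norm (H (x, y)) \<le> norm (a x * b y)"
      by (rule AE_I2) (simp add: H_def indicator_def abs_mult)
  qed
  have intH: "integrable (lborel \<Otimes>\<^sub>M lborel) H"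
  proof (rule lborel_pair.Fubini_integrable[OF Hm])
    have m1: "(\<lambda>x. \<integral>y. norm (H (x, y)) \<partial>lborel) \<in> borel_measurable lborel"
      by measurable
    have b1: "norm (\<integral>y. norm (H (x, y)) \<partial>lborel) \<le> norm (a x * (\<integral>y. norm (b y) \<partial>lborel))" for x
    proof -
      have "(\<integral>y. norm (H (x, y)) \<partial>lborel) \<le> (\<integral>y. norm (a x) * norm (b y) \<partial>lborel)"
      proof (rule integral_mono)
        show "integrable lborel (\<lambda>y. norm (H (x, y)))" using intHx[of x] by (rule integrable_norm)
        show "integrable lborel (\<lambda>y. norm (a x) * norm (b y))" using ib by simp
        show "norm (H (x, y)) \<le> norm (a x) * norm (b y)" for y
          by (simp add: H_def abs_mult split: split_indicator)
      qed
      moreover have "0 \<le> (\<integral>y. norm (H (x, y)) \<partial>lborel)" by simp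
      moreover have "(\<integral>y. norm (a x) * norm (b y) \<partial>lborel) = norm (a x * (\<integral>y. norm (b y) \<partial>lborel))"
        by (simp add: abs_mult)
      ultimately show ?thesis by (metis abs_of_nonneg real_norm_def)
    qed
    show "integrable lborel (\<lambda>x. \<integral>y. norm (H (x, y)) \<partial>lborel)"
    proof (rule Bochner_Integration.integrable_bound[where f="\<lambda>x. a x * (\<integral>y. norm (b y) \<partial>lborel)"])
      show "integrable lborel (\<lambda>x. a x * (\<integral>y. norm (b y) \<partial>lborel))"
        using ia by (rule integrable_mult_left)
      show "AE x in lborel. norm (\<integral>y. norm (H (x, y)) \<partial>lborel) \<le> norm (a x * (\<integral>y. norm (b y) \<partial>lborel))"
        using b1 by simp
    qed (rule m1)
    show "AE x in lborel. integrable lborel (\<lambda>y. H (x, y))"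
      using intHx by simp
  qed
  from lborel_pair.Fubini_integral[of "\<lambda>x y. H (x,y)"] intH
  have "(\<integral>y. (\<integral>x. H (x,y) \<partial>lborel) \<partial>lborel) = (\<integral>x. (\<integral>y. H (x,y) \<partial>lborel) \<partial>lborel)"
    by simp
  moreover have "(\<integral>x. H (x,y) \<partial>lborel) = b y * (\<integral>x. a x * indicator {y..} x \<partial>lborel)" for y
  proof -
    have "H (x,y) = b y * (a x * indicator {y..} x)" for x
      by (simp add: H_def split: split_indicator)
    then show ?thesis by simp
  qed
  moreover have "(\<integral>y. H (x,y) \<partial>lborel) = a x * (\<integral>y. b y * indicator {..x} y \<partial>lborel)" for x
  proof -
    have "H (x,y) = a x * (b y * indicator {..x} y)" for y
      by (simp add: H_def)
    then show ?thesis by simp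
  qed
  ultimately show ?thesis by simp
qed

lemma set_integrable_mult_cont:
  fixes f G :: "real \<Rightarrow> real"
  assumes f: "set_integrable lborel {s..t} f" and G: "continuous_on UNIV G"
  shows "set_integrable lborel {s..t} (\<lambda>x. f x * G x)"
proof -
  have "compact (G ` {s..t})"
    by (rule compact_continuous_image) (auto intro: continuous_on_subset[OF G])
  then obtain B where B: "\<And>x. x \<in> {s..t} \<Longrightarrow> norm (G x) \<le> B"
    by (meson bounded_iff compact_imp_bounded image_eqI)
  have fm: "(\<lambda>x. indicator {s..t} x *\<^sub>R f x) \<in> borel_measurable lborel"
    using f unfolding set_integrable_def by auto
  have Gm: "G \<in> borel_measurable lborel"
    using G by (simp add: borel_measurable_continuous_onI)
  show ?thesis
    unfolding set_integrable_def
  proof (rule Bochner_Integration.integrable_bound[where f="\<lambda>x. B * (indicator {s..t} x *\<^sub>R f x)"])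
    show "integrable lborel (\<lambda>x. B * (indicator {s..t} x *\<^sub>R f x))"
      using f unfolding set_integrable_def by (rule integrable_mult_right)
    have e: "(\<lambda>x. indicator {s..t} x *\<^sub>R (f x * G x)) = (\<lambda>x. (indicator {s..t} x *\<^sub>R f x) * G x)"
      by auto
    show "(\<lambda>x. indicator {s..t} x *\<^sub>R (f x * G x)) \<in> borel_measurable lborel"
      unfolding e using fm Gm by (rule borel_measurable_times)
    show "AE x in lborel. norm (indicator {s..t} x *\<^sub>R (f x * G x)) \<le> norm (B * (indicator {s..t} x *\<^sub>R f x))"
    proof (rule AE_I2)
      fix x
      show "norm (indicator {s..t} x *\<^sub>R (f x * G x)) \<le> norm (B * (indicator {s..t} x *\<^sub>R f x))"
      proof (cases "x \<in> {s..t}")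
        case True
        then have "\<bar>G x\<bar> \<le> B" using B by simp
        then have "\<bar>f x\<bar> * \<bar>G x\<bar> \<le> \<bar>f x\<bar> * \<bar>B\<bar>" by (intro mult_left_mono) auto
        then show ?thesis using True by (simp add: abs_mult mult.commute)
      qed simp
    qed
  qed
qed

lemma acd_mult:
  assumes fF: "acd f F" and gG: "acd g G"
  shows "acd (\<lambda>x. f x * G x + F x * g x) (\<lambda>x. F x * G x)"
  unfolding acd_def
proof (intro allI impI conjI)
  fix s t :: real assume st: "s \<le> t"
  have cF: "continuous_on UNIV F" and cG: "continuous_on UNIV G"
    using acd_cont fF gG by auto
  have sf: "set_integrable lborel {s..t} f" and sg: "set_integrable lborel {s..t} g"
    using acdD(1) fF gG st by auto
  have sfG: "set_integrable lborel {s..t} (\<lambda>x. f x * G x)"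
    by (rule set_integrable_mult_cont[OF sf cG])
  have sgF: "set_integrable lborel {s..t} (\<lambda>x. g x * F x)"
    by (rule set_integrable_mult_cont[OF sg cF])
  then have sFg: "set_integrable lborel {s..t} (\<lambda>x. F x * g x)"
    by (simp add: mult.commute)
  show "set_integrable lborel {s..t} (\<lambda>x. f x * G x + F x * g x)"
    using sfG sFg by (rule set_integral_add)
  define a where "a = (\<lambda>x. indicator {s..t} x * g x)"
  define b where "b = (\<lambda>x. indicator {s..t} x * f x)"
  have ia: "integrable lborel a" using sg unfolding a_def set_integrable_def by simp
  have ib: "integrable lborel b" using sf unfolding b_def set_integrable_def by simp
  note TF = tri_fubini[OF ia ib]
  have L: "a x * (\<integral>y. b y * indicator {..x} y \<partial>lborel) = indicator {s..t} x * (g x * F x) - F s * (indicator {s..t} x * g x)" for x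
  proof (cases "x \<in> {s..t}")
    case True
    have "(\<integral>y. b y * indicator {..x} y \<partial>lborel) = (LINT y:{s..x}|lborel. f y)"
      unfolding set_lebesgue_integral_def b_def using True
      by (intro Bochner_Integration.integral_cong) (auto split: split_indicator)
    also have "\<dots> = F x - F s" using acdD(2)[OF fF, of s x] True by simp
    finally have eq: "(\<integral>y. b y * indicator {..x} y \<partial>lborel) = F x - F s" .
    show ?thesis unfolding eq a_def using True by (simp add: algebra_simps)
  qed (simp add: a_def)
  have R: "b y * (\<integral>x. a x * indicator {y..} x \<partial>lborel) = G t * (indicator {s..t} y * f y) - indicator {s..t} y * (f y * G y)" for y
  proof (cases "y \<in> {s..t}")
    case True
    have "(\<integral>x. a x * indicator {y..} x \<partial>lborel) = (LINT x:{y..t}|lborel. g x)"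
      unfolding set_lebesgue_integral_def a_def using True
      by (intro Bochner_Integration.integral_cong) (auto split: split_indicator)
    also have "\<dots> = G t - G y" using acdD(2)[OF gG, of y t] True by simp
    finally have eq: "(\<integral>x. a x * indicator {y..} x \<partial>lborel) = G t - G y" .
    show ?thesis unfolding eq b_def using True by (simp add: algebra_simps)
  qed (simp add: b_def)
  have i1: "integrable lborel (\<lambda>x. indicator {s..t} x * (g x * F x))" using sgF unfolding set_integrable_def by simp
  have i2: "integrable lborel (\<lambda>x. indicator {s..t} x * (f x * G x))" using sfG unfolding set_integrable_def by simp
  have "(\<integral>x. indicator {s..t} x * (g x * F x) - F s * (indicator {s..t} x * g x) \<partial>lborel)
      = (\<integral>y. G t * (indicator {s..t} y * f y) - indicator {s..t} y * (f y * G y) \<partial>lborel)"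
    using TF L R by simp
  then have "(LINT x:{s..t}|lborel. g x * F x) - F s * (LINT x:{s..t}|lborel. g x)
      = G t * (LINT x:{s..t}|lborel. f x) - (LINT x:{s..t}|lborel. f x * G x)"
    using i1 i2 ia ib unfolding set_lebesgue_integral_def a_def b_def
    by (simp add: Bochner_Integration.integral_diff)
  then have "(LINT x:{s..t}|lborel. g x * F x) + (LINT x:{s..t}|lborel. f x * G x)
      = F s * (G t - G s) + G t * (F t - F s)"
    using acdD(2)[OF fF st] acdD(2)[OF gG st] by simp
  moreover have "(LINT x:{s..t}|lborel. f x * G x + F x * g x)
      = (LINT x:{s..t}|lborel. f x * G x) + (LINT x:{s..t}|lborel. g x * F x)"
    using sfG sgF by (simp add: set_integral_add mult.commute)
  ultimately show "F t * G t - F s * G s = (LINT x:{s..t}|lborel. f x * G x + F x * g x)"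
    by (simp add: algebra_simps)
qed

lemma zero_on_intervals_AE_I:
  fixes z :: "real \<Rightarrow> real"
  assumes si: "\<And>a b. a \<le> b \<Longrightarrow> set_integrable lborel {a..b} z"
      and zi: "\<And>a b. a \<le> b \<Longrightarrow> (LINT x:{a..b}|lborel. z x) = 0"
      and n: "0 \<le> n"
  shows "AE x in lborel. x \<in> {-n..n} \<longrightarrow> z x = 0"
proof -
  define I where "I = {-n..n}"
  define zn where "zn = (\<lambda>x. indicator I x * z x)"
  have izn: "integrable lborel zn" using si[of "-n" n] n unfolding zn_def I_def set_integrable_def by simp
  then have [measurable]: "zn \<in> borel_measurable borel" by auto
  have ip: "integrable lborel (\<lambda>x. max 0 (zn x))"
    by (rule Bochner_Integration.integrable_max[OF _ izn]) simp
  have im: "integrable lborel (\<lambda>x. max 0 (- zn x))"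
    by (rule Bochner_Integration.integrable_max[OF _ integrable_minus[OF izn]]) simp
  have key: "(\<integral>x. max 0 (zn x) * indicator {c<..} x \<partial>lborel) = (\<integral>x. max 0 (- zn x) * indicator {c<..} x \<partial>lborel)" for c
  proof -
    have i1: "integrable lborel (\<lambda>x. max 0 (zn x) * indicator {c<..} x)"
      by (rule integrable_real_mult_indicator[OF _ ip]) simp
    have i2: "integrable lborel (\<lambda>x. max 0 (- zn x) * indicator {c<..} x)"
      by (rule integrable_real_mult_indicator[OF _ im]) simp
    have "(\<integral>x. max 0 (zn x) * indicator {c<..} x \<partial>lborel) - (\<integral>x. max 0 (- zn x) * indicator {c<..} x \<partial>lborel)
        = (\<integral>x. zn x * indicator {c<..} x \<partial>lborel)"
    proof -
      have "(\<integral>x. max 0 (zn x) * indicator {c<..} x \<partial>lborel) - (\<integral>x. max 0 (- zn x) * indicator {c<..} x \<partial>lborel)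
          = (\<integral>x. max 0 (zn x) * indicator {c<..} x - max 0 (- zn x) * indicator {c<..} x \<partial>lborel)"
        using i1 i2 by (rule Bochner_Integration.integral_diff[symmetric])
      also have "\<dots> = (\<integral>x. zn x * indicator {c<..} x \<partial>lborel)"
        by (intro Bochner_Integration.integral_cong) (auto simp: max_def split: split_indicator)
      finally show ?thesis .
    qed
    also have "(\<integral>x. zn x * indicator {c<..} x \<partial>lborel) = 0"
    proof (cases "c < n")
      case True
      define p where "p = max c (-n)"
      have pn: "p \<le> n" using True n unfolding p_def by auto
      have "(\<integral>x. zn x * indicator {c<..} x \<partial>lborel) = (LINT x:({c<..} \<inter> {-n..n})|lborel. z x)"
        unfolding set_lebesgue_integral_def zn_def I_def
        by (intro Bochner_Integration.integral_cong) (auto split: split_indicator)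
      also have "\<dots> = (LINT x:{p..n}|lborel. z x)"
      proof (rule set_integral_cong_set)
        show "set_borel_measurable lborel {p..n} z"
          using si[OF pn] unfolding set_integrable_def set_borel_measurable_def by auto
        have "set_integrable lborel ({c<..} \<inter> {-n..n}) z"
          by (rule set_integrable_subset[OF si[of "-n" n]]) (use n in auto)
        then show "set_borel_measurable lborel ({c<..} \<inter> {-n..n}) z"
          unfolding set_integrable_def set_borel_measurable_def by auto
        show "AE x in lborel. (x \<in> {p..n}) = (x \<in> {c<..} \<inter> {-n..n})"
          using AE_lborel_singleton[of p] by eventually_elim (auto simp: p_def)
      qed
      also have "\<dots> = 0" using zi[OF pn] .
      finally show ?thesis .
    next
      case False
      then show ?thesis
        unfolding zn_def I_def by (intro integral_eq_zero_AE AE_I2) (auto split: split_indicator)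
    qed
    finally show ?thesis by simp
  qed
  have "density lborel (\<lambda>x. ennreal (max 0 (zn x))) = density lborel (\<lambda>x. ennreal (max 0 (- zn x)))"
  proof (rule measure_eqI_lessThan)
    show "sets (density lborel (\<lambda>x. ennreal (max 0 (zn x)))) = sets borel" by simp
    show "sets (density lborel (\<lambda>x. ennreal (max 0 (- zn x)))) = sets borel" by simp
    fix c :: real
    have e1: "emeasure (density lborel (\<lambda>x. ennreal (max 0 (zn x)))) {c<..}
        = ennreal (\<integral>x. max 0 (zn x) * indicator {c<..} x \<partial>lborel)"
      by (simp add: emeasure_density nn_integral_eq_integral[symmetric] integrable_real_mult_indicator[OF _ ip]
          ennreal_mult' ennreal_indicator)
    have e2: "emeasure (density lborel (\<lambda>x. ennreal (max 0 (- zn x)))) {c<..}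
        = ennreal (\<integral>x. max 0 (- zn x) * indicator {c<..} x \<partial>lborel)"
      by (simp add: emeasure_density nn_integral_eq_integral[symmetric] integrable_real_mult_indicator[OF _ im]
          ennreal_mult' ennreal_indicator)
    show "emeasure (density lborel (\<lambda>x. ennreal (max 0 (zn x)))) {c<..} < \<infinity>"
      unfolding e1 by simp
    show "emeasure (density lborel (\<lambda>x. ennreal (max 0 (zn x)))) {c<..} =
          emeasure (density lborel (\<lambda>x. ennreal (max 0 (- zn x)))) {c<..}"
      unfolding e1 e2 key ..
  qed
  then have "AE x in lborel. ennreal (max 0 (zn x)) = ennreal (max 0 (- zn x))"
    by (subst (asm) sigma_finite_measure.density_unique_iff[OF sigma_finite_lborel]) auto
  then show ?thesis
  proof (rule AE_mp, intro AE_I2 impI)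
    fix x assume "ennreal (max 0 (zn x)) = ennreal (max 0 (- zn x))" "x \<in> {-n..n}"
    then show "z x = 0" unfolding zn_def I_def by (auto simp: max_def split: if_splits)
  qed
qed

lemma zero_on_intervals_AE:
  fixes z :: "real \<Rightarrow> real"
  assumes si: "\<And>a b. a \<le> b \<Longrightarrow> set_integrable lborel {a..b} z"
      and zi: "\<And>a b. a \<le> b \<Longrightarrow> (LINT x:{a..b}|lborel. z x) = 0"
  shows "AE x in lborel. z x = 0"
proof -
  have "AE x in lborel. \<forall>n::nat. x \<in> {-real n..real n} \<longrightarrow> z x = 0"
    by (subst AE_all_countable) (intro allI zero_on_intervals_AE_I[OF si zi]; simp)
  then show ?thesis
  proof (rule AE_mp, intro AE_I2 impI)
    fix x assume H: "\<forall>n::nat. x \<in> {-real n..real n} \<longrightarrow> z x = 0"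
    obtain n :: nat where "\<bar>x\<bar> \<le> real n" using real_arch_simple by blast
    then show "z x = 0" using H[rule_format, of n] by (auto simp: abs_le_iff)
  qed
qed

lemma acd_unique_AE:
  assumes "acd g1 F" "acd g2 F"
  shows "AE x in lborel. g1 x = g2 x"
proof -
  have d: "acd (\<lambda>x. g1 x - g2 x) (\<lambda>x. F x - F x)" by (rule acd_diff[OF assms])
  have "AE x in lborel. g1 x - g2 x = 0"
  proof (rule zero_on_intervals_AE)
    fix a b :: real assume "a \<le> b"
    show "set_integrable lborel {a..b} (\<lambda>x. g1 x - g2 x)" using acdD(1)[OF d \<open>a \<le> b\<close>] .
    show "(LINT x:{a..b}|lborel. g1 x - g2 x) = 0" using acdD(2)[OF d \<open>a \<le> b\<close>] by simp
  qed
  then show ?thesis by auto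
qed

lemma acd_unique_cont:
  assumes "acd g1 F" "acd g2 F" "continuous_on UNIV g1" "continuous_on UNIV g2"
  shows "g1 = g2"
proof (rule ccontr)
  assume "g1 \<noteq> g2"
  then obtain x0 where x0: "g1 x0 \<noteq> g2 x0" by auto
  define S where "S = {x. g1 x \<noteq> g2 x}"
  have "open S" unfolding S_def
    using assms(3,4) by (intro open_Collect_neq) auto
  have "AE x in lborel. x \<notin> S" using acd_unique_AE[OF assms(1,2)] unfolding S_def by simp
  then have "S \<in> null_sets lborel"
    using \<open>open S\<close> by (subst (asm) AE_iff_null) auto
  then have "negligible S"
    by (simp add: negligible_iff_null_sets null_sets_completionI)
  then have "S = {}" using open_not_negligible[OF \<open>open S\<close>] by auto
  then show False using x0 unfolding S_def by auto
qed

lemma nn_exp_atLeast: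
  fixes c a :: real assumes c: "c > 0"
  shows "(\<integral>\<^sup>+x. ennreal (exp (-c*x)) * indicator {a..} x \<partial>lborel) = ennreal (exp (-c*a) / c)"
proof -
  have "(\<integral>\<^sup>+x. ennreal (exp (-c*x)) * indicator {a..} x \<partial>lborel) = 0 - (- exp (-c*a) / c)"
  proof (rule nn_integral_FTC_atLeast)
    show "(\<lambda>x. exp (-c*x)) \<in> borel_measurable borel" by measurable
    show "DERIV (\<lambda>x. - exp (-c*x) / c) x :> exp (-c*x)" for x
      using c by (auto intro!: derivative_eq_intros)
    show "0 \<le> exp (-c*x)" for x by simp
    show "((\<lambda>x. - exp (-c*x) / c) \<longlongrightarrow> 0) at_top" using c by real_asymp
  qed
  then show ?thesis by simp
qed

lemma nn_exp_atMost:
  fixes c a :: real assumes c: "c > 0"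
  shows "(\<integral>\<^sup>+x. ennreal (exp (c*x)) * indicator {..a} x \<partial>lborel) = ennreal (exp (c*a) / c)"
proof -
  have mm: "(\<lambda>x. ennreal (exp (c*x)) * indicator {..a} x) \<in> borel_measurable borel" by measurable
  have "(\<integral>\<^sup>+x. ennreal (exp (c*x)) * indicator {..a} x \<partial>lborel)
      = (\<integral>\<^sup>+x. ennreal (exp (c*(0 + (-1)*x))) * indicator {..a} (0 + (-1)*x) \<partial>lborel)"
    using nn_integral_real_affine[OF mm, of "-1" 0] by simp
  also have "\<dots> = (\<integral>\<^sup>+x. ennreal (exp (-c*x)) * indicator {-a..} x \<partial>lborel)"
    by (intro nn_integral_cong) (auto split: split_indicator)
  also have "\<dots> = ennreal (exp (c*a) / c)" using nn_exp_atLeast[OF c, of "-a"] by simp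
  finally show ?thesis .
qed

lemma exp_atLeast_integrable:
  fixes c a :: real assumes c: "c > 0"
  shows "set_integrable lborel {a..} (\<lambda>x. exp (-c*x))"
    and "(LINT x:{a..}|lborel. exp (-c*x)) = exp (-c*a) / c"
proof -
  have m: "(\<lambda>x. indicator {a..} x *\<^sub>R exp (-c*x)) \<in> borel_measurable lborel" by measurable
  have nn: "(\<integral>\<^sup>+x. ennreal (indicator {a..} x *\<^sub>R exp (-c*x)) \<partial>lborel) = ennreal (exp (-c*a) / c)"
    using nn_exp_atLeast[OF c, of a]
    by (subst nn_integral_cong[where v="\<lambda>x. ennreal (exp (-c*x)) * indicator {a..} x"]) (auto split: split_indicator)
  show i: "set_integrable lborel {a..} (\<lambda>x. exp (-c*x))"
    unfolding set_integrable_def by (rule integrableI_nn_integral_finite[OF m _ nn]) simp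
  show "(LINT x:{a..}|lborel. exp (-c*x)) = exp (-c*a) / c"
    unfolding set_lebesgue_integral_def
  proof -
    have "integral\<^sup>L lborel (\<lambda>x. indicator {a..} x *\<^sub>R exp (-c*x)) = enn2real (\<integral>\<^sup>+x. ennreal (indicator {a..} x *\<^sub>R exp (-c*x)) \<partial>lborel)"
      by (rule integral_eq_nn_integral[OF m]) simp
    also have "\<dots> = exp (-c*a) / c" unfolding nn using c by simp
    finally show "integral\<^sup>L lborel (\<lambda>x. indicator {a..} x *\<^sub>R exp (-c*x)) = exp (-c*a) / c" .
  qed
qed

lemma exp_atMost_integrable:
  fixes c a :: real assumes c: "c > 0"
  shows "set_integrable lborel {..a} (\<lambda>x. exp (c*x))"
    and "(LINT x:{..a}|lborel. exp (c*x)) = exp (c*a) / c"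
proof -
  have m: "(\<lambda>x. indicator {..a} x *\<^sub>R exp (c*x)) \<in> borel_measurable lborel" by measurable
  have nn: "(\<integral>\<^sup>+x. ennreal (indicator {..a} x *\<^sub>R exp (c*x)) \<partial>lborel) = ennreal (exp (c*a) / c)"
    using nn_exp_atMost[OF c, of a]
    by (subst nn_integral_cong[where v="\<lambda>x. ennreal (exp (c*x)) * indicator {..a} x"]) (auto split: split_indicator)
  show i: "set_integrable lborel {..a} (\<lambda>x. exp (c*x))"
    unfolding set_integrable_def by (rule integrableI_nn_integral_finite[OF m _ nn]) simp
  show "(LINT x:{..a}|lborel. exp (c*x)) = exp (c*a) / c"
    unfolding set_lebesgue_integral_def
  proof -
    have "integral\<^sup>L lborel (\<lambda>x. indicator {..a} x *\<^sub>R exp (c*x)) = enn2real (\<integral>\<^sup>+x. ennreal (indicator {..a} x *\<^sub>R exp (c*x)) \<partial>lborel)"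
      by (rule integral_eq_nn_integral[OF m]) simp
    also have "\<dots> = exp (c*a) / c" unfolding nn using c by simp
    finally show "integral\<^sup>L lborel (\<lambda>x. indicator {..a} x *\<^sub>R exp (c*x)) = exp (c*a) / c" .
  qed
qed

lemma L2w_meas: "L2w w g \<Longrightarrow> g \<in> borel_measurable borel"
  by (simp add: L2w_def)

lemma L2w_int: "L2w w g \<Longrightarrow> integrable lborel (\<lambda>x. (g x)\<^sup>2 * exp (w * x))"
  by (simp add: L2w_def)

lemma L2w_prod:
  assumes "L2w w f" "L2w w g"
  shows "integrable lborel (\<lambda>x. f x * g x * exp (w * x))"
proof (rule Bochner_Integration.integrable_bound[where f="\<lambda>x. ((f x)\<^sup>2 * exp (w * x) + (g x)\<^sup>2 * exp (w * x)) / 2"])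
  show "integrable lborel (\<lambda>x. ((f x)\<^sup>2 * exp (w * x) + (g x)\<^sup>2 * exp (w * x)) / 2)"
    using L2w_int[OF assms(1)] L2w_int[OF assms(2)] by simp
  have [measurable]: "f \<in> borel_measurable borel" "g \<in> borel_measurable borel"
    using assms by (auto simp: L2w_def)
  show "(\<lambda>x. f x * g x * exp (w * x)) \<in> borel_measurable lborel" by measurable
  show "AE x in lborel. norm (f x * g x * exp (w * x)) \<le> norm (((f x)\<^sup>2 * exp (w * x) + (g x)\<^sup>2 * exp (w * x)) / 2)"
  proof (rule AE_I2)
    fix x
    have "2 * \<bar>f x * g x\<bar> \<le> (f x)\<^sup>2 + (g x)\<^sup>2"
      using sum_squares_bound[of "\<bar>f x\<bar>" "\<bar>g x\<bar>"] by (simp add: abs_mult)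
    then have "2 * \<bar>f x * g x\<bar> * exp (w * x) \<le> ((f x)\<^sup>2 + (g x)\<^sup>2) * exp (w * x)"
      by (intro mult_right_mono) auto
    then show "norm (f x * g x * exp (w * x)) \<le> norm (((f x)\<^sup>2 * exp (w * x) + (g x)\<^sup>2 * exp (w * x)) / 2)"
      by (simp add: abs_mult algebra_simps)
  qed
qed

lemma L2w_add:
  assumes "L2w w f" "L2w w g"
  shows "L2w w (\<lambda>x. f x + g x)"
proof -
  have [measurable]: "f \<in> borel_measurable borel" "g \<in> borel_measurable borel"
    using assms by (auto simp: L2w_def)
  have e: "(\<lambda>x. (f x + g x)\<^sup>2 * exp (w * x)) = (\<lambda>x. (f x)\<^sup>2 * exp (w * x) + 2 * (f x * g x * exp (w * x)) + (g x)\<^sup>2 * exp (w * x))"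
    by (auto simp: power2_eq_square algebra_simps)
  show ?thesis unfolding L2w_def e
    using L2w_int[OF assms(1)] L2w_int[OF assms(2)] L2w_prod[OF assms] by auto
qed

lemma L2w_cmult:
  assumes "L2w w f"
  shows "L2w w (\<lambda>x. c * f x)"
proof -
  have [measurable]: "f \<in> borel_measurable borel" using assms by (auto simp: L2w_def)
  have e: "(\<lambda>x. (c * f x)\<^sup>2 * exp (w * x)) = (\<lambda>x. c\<^sup>2 * ((f x)\<^sup>2 * exp (w * x)))"
    by (auto simp: power2_eq_square algebra_simps)
  show ?thesis unfolding L2w_def e
    using L2w_int[OF assms(1)] by auto
qed

lemma L2w_diff:
  assumes "L2w w f" "L2w w g"
  shows "L2w w (\<lambda>x. f x - g x)"
  using L2w_add[OF assms(1) L2w_cmult[OF assms(2), of "-1"]] by simp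

lemma L2w_cong: "L2w w f \<Longrightarrow> (\<And>x. f x = g x) \<Longrightarrow> L2w w g"
proof -
  assume "L2w w f" "\<And>x. f x = g x"
  then have "f = g" by auto
  then show "L2w w g" using \<open>L2w w f\<close> by simp
qed

lemma L2w_atLeast:
  assumes w: "w > 0" and g: "L2w w g"
  shows "set_integrable lborel {a..} g"
proof -
  have [measurable]: "g \<in> borel_measurable borel" using g by (simp add: L2w_def)
  have ie: "integrable lborel (\<lambda>x. indicator {a..} x *\<^sub>R exp (-w*x))"
    using exp_atLeast_integrable(1)[OF w, of a] unfolding set_integrable_def .
  show ?thesis unfolding set_integrable_def
  proof (rule Bochner_Integration.integrable_bound[where f="\<lambda>x. (g x)\<^sup>2 * exp (w * x) + indicator {a..} x *\<^sub>R exp (-w*x)"])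
    show "integrable lborel (\<lambda>x. (g x)\<^sup>2 * exp (w * x) + indicator {a..} x *\<^sub>R exp (-w*x))"
      using L2w_int[OF g] ie by simp
    show "(\<lambda>x. indicator {a..} x *\<^sub>R g x) \<in> borel_measurable lborel" by measurable
    show "AE x in lborel. norm (indicator {a..} x *\<^sub>R g x) \<le> norm ((g x)\<^sup>2 * exp (w * x) + indicator {a..} x *\<^sub>R exp (-w*x))"
    proof (rule AE_I2)
      fix x
      define e where "e = exp (w * x / 2)"
      have ep: "e > 0" unfolding e_def by simp
      have e2: "exp (w * x) = e * e" unfolding e_def by (simp flip: exp_add)
      have e3: "exp (-(w*x)) = inverse e * inverse e" unfolding e_def by (simp flip: exp_add exp_minus)
      have "\<bar>g x\<bar> = (\<bar>g x\<bar> * e) * inverse e" using ep by simp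
      also have "\<dots> \<le> (\<bar>g x\<bar> * e)\<^sup>2 + (inverse e)\<^sup>2"
      proof -
        have h1: "2 * (\<bar>g x\<bar> * e) * inverse e \<le> (\<bar>g x\<bar> * e)\<^sup>2 + (inverse e)\<^sup>2"
          by (rule sum_squares_bound)
        have h2: "0 \<le> (\<bar>g x\<bar> * e) * inverse e" using ep by simp
        have h3: "2 * (\<bar>g x\<bar> * e) * inverse e = 2 * ((\<bar>g x\<bar> * e) * inverse e)" by simp
        show ?thesis using h1 h2 h3 by linarith
      qed
      also have "\<dots> = (g x)\<^sup>2 * exp (w * x) + exp (-w*x)"
        by (simp add: e2 e3 power_mult_distrib power2_eq_square[of e] power2_eq_square[of "inverse e"])
      finally have "\<bar>g x\<bar> \<le> (g x)\<^sup>2 * exp (w * x) + exp (-w*x)" .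
      moreover have "0 \<le> (g x)\<^sup>2 * exp (w * x)" by simp
      ultimately show "norm (indicator {a..} x *\<^sub>R g x) \<le> norm ((g x)\<^sup>2 * exp (w * x) + indicator {a..} x *\<^sub>R exp (-w*x))"
        by (auto split: split_indicator)
    qed
  qed
qed

lemma acd_lim_top:
  assumes "acd g F" "set_integrable lborel {a..} g"
  shows "(F \<longlongrightarrow> F a + (LINT x:{a..}|lborel. g x)) at_top"
proof -
  have "((\<lambda>b. F a + (LINT x:{a..b}|lborel. g x)) \<longlongrightarrow> F a + (LINT x:{a..}|lborel. g x)) at_top"
    by (intro tendsto_add tendsto_const tendsto_set_lebesgue_integral_at_top assms(2)) auto
  moreover have "eventually (\<lambda>b. F a + (LINT x:{a..b}|lborel. g x) = F b) at_top"
    using eventually_ge_at_top[of a]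
  proof eventually_elim
    case (elim b) then show ?case using acdD(2)[OF assms(1) elim] by simp
  qed
  ultimately show ?thesis by (rule Lim_transform_eventually)
qed

lemma acd_lim_bot:
  assumes "acd g F" "set_integrable lborel {..b} g"
  shows "(F \<longlongrightarrow> F b - (LINT x:{..b}|lborel. g x)) at_bot"
proof -
  have "((\<lambda>a. F b - (LINT x:{a..b}|lborel. g x)) \<longlongrightarrow> F b - (LINT x:{..b}|lborel. g x)) at_bot"
    by (intro tendsto_diff tendsto_const tendsto_set_lebesgue_integral_at_bot assms(2)) auto
  moreover have "eventually (\<lambda>a. F b - (LINT x:{a..b}|lborel. g x) = F a) at_bot"
    using eventually_le_at_bot[of b]
  proof eventually_elim
    case (elim a) then show ?case using acdD(2)[OF assms(1) elim] by simp
  qed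
  ultimately show ?thesis by (rule Lim_transform_eventually)
qed

lemma lim_integrable_zero_top:
  fixes \<phi> :: "real \<Rightarrow> real"
  assumes i: "set_integrable lborel {a..} \<phi>" and l: "(\<phi> \<longlongrightarrow> l) at_top"
  shows "l = 0"
proof (rule ccontr)
  assume l0: "l \<noteq> 0"
  have "((\<lambda>x. \<bar>\<phi> x\<bar>) \<longlongrightarrow> \<bar>l\<bar>) at_top" using l by (rule tendsto_rabs)
  moreover have "\<bar>l\<bar>/2 < \<bar>l\<bar>" using l0 by simp
  ultimately have "eventually (\<lambda>x. \<bar>l\<bar>/2 < \<bar>\<phi> x\<bar>) at_top" by (rule order_tendstoD)
  then obtain T0 where T0: "\<And>x. x \<ge> T0 \<Longrightarrow> \<bar>l\<bar>/2 < \<bar>\<phi> x\<bar>" by (auto simp: eventually_at_top_linorder)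
  define T where "T = max T0 a"
  define B where "B = (\<integral>x. norm (indicator {a..} x *\<^sub>R \<phi> x) \<partial>lborel)"
  have iB: "integrable lborel (\<lambda>x. norm (indicator {a..} x *\<^sub>R \<phi> x))"
    using i unfolding set_integrable_def by (rule integrable_norm)
  have bnd: "\<bar>l\<bar>/2 * n \<le> B" if n: "n \<ge> 0" for n :: real
  proof -
    have "(\<integral>x. \<bar>l\<bar>/2 * indicator {T..T+n} x \<partial>lborel) = \<bar>l\<bar>/2 * n"
      using n by simp
    moreover have "(\<integral>x. \<bar>l\<bar>/2 * indicator {T..T+n} x \<partial>lborel) \<le> B"
      unfolding B_def
    proof (rule integral_mono[OF _ iB])
      show "integrable lborel (\<lambda>x. \<bar>l\<bar>/2 * indicator {T..T+n} x)"
        by (intro integrable_mult_right integrable_real_indicator) (auto simp: emeasure_lborel_Icc_eq)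
      fix x
      show "\<bar>l\<bar>/2 * indicator {T..T+n} x \<le> norm (indicator {a..} x *\<^sub>R \<phi> x)"
      proof (cases "x \<in> {T..T+n}")
        case True
        then have "x \<ge> T0" "x \<ge> a" unfolding T_def by auto
        then show ?thesis using T0[of x] True by auto
      qed simp
    qed
    ultimately show ?thesis using n by simp
  qed
  have lp: "\<bar>l\<bar>/2 > 0" using l0 by simp
  have "\<bar>l\<bar>/2 * (2 * (\<bar>B\<bar> + 1) / \<bar>l\<bar>) \<le> B"
    using bnd[of "2 * (\<bar>B\<bar> + 1) / \<bar>l\<bar>"] by simp
  moreover have "\<bar>l\<bar>/2 * (2 * (\<bar>B\<bar> + 1) / \<bar>l\<bar>) = \<bar>B\<bar> + 1" using l0 by simp
  ultimately show False by simp
qed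

lemma lim_integrable_zero_bot:
  fixes \<phi> :: "real \<Rightarrow> real"
  assumes i: "set_integrable lborel {..a} \<phi>" and l: "(\<phi> \<longlongrightarrow> l) at_bot"
  shows "l = 0"
proof (rule ccontr)
  assume l0: "l \<noteq> 0"
  have "((\<lambda>x. \<bar>\<phi> x\<bar>) \<longlongrightarrow> \<bar>l\<bar>) at_bot" using l by (rule tendsto_rabs)
  moreover have "\<bar>l\<bar>/2 < \<bar>l\<bar>" using l0 by simp
  ultimately have "eventually (\<lambda>x. \<bar>l\<bar>/2 < \<bar>\<phi> x\<bar>) at_bot" by (rule order_tendstoD)
  then obtain T0 where T0: "\<And>x. x \<le> T0 \<Longrightarrow> \<bar>l\<bar>/2 < \<bar>\<phi> x\<bar>" by (auto simp: eventually_at_bot_linorder)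
  define T where "T = min T0 a"
  define B where "B = (\<integral>x. norm (indicator {..a} x *\<^sub>R \<phi> x) \<partial>lborel)"
  have iB: "integrable lborel (\<lambda>x. norm (indicator {..a} x *\<^sub>R \<phi> x))"
    using i unfolding set_integrable_def by (rule integrable_norm)
  have bnd: "\<bar>l\<bar>/2 * n \<le> B" if n: "n \<ge> 0" for n :: real
  proof -
    have "(\<integral>x. \<bar>l\<bar>/2 * indicator {T-n..T} x \<partial>lborel) = \<bar>l\<bar>/2 * n"
      using n by simp
    moreover have "(\<integral>x. \<bar>l\<bar>/2 * indicator {T-n..T} x \<partial>lborel) \<le> B"
      unfolding B_def
    proof (rule integral_mono[OF _ iB])
      show "integrable lborel (\<lambda>x. \<bar>l\<bar>/2 * indicator {T-n..T} x)"
        by (intro integrable_mult_right integrable_real_indicator) (auto simp: emeasure_lborel_Icc_eq)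
      fix x
      show "\<bar>l\<bar>/2 * indicator {T-n..T} x \<le> norm (indicator {..a} x *\<^sub>R \<phi> x)"
      proof (cases "x \<in> {T-n..T}")
        case True
        then have "x \<le> T0" "x \<le> a" unfolding T_def by auto
        then show ?thesis using T0[of x] True by auto
      qed simp
    qed
    ultimately show ?thesis using n by simp
  qed
  have "\<bar>l\<bar>/2 * (2 * (\<bar>B\<bar> + 1) / \<bar>l\<bar>) \<le> B"
    using bnd[of "2 * (\<bar>B\<bar> + 1) / \<bar>l\<bar>"] by simp
  moreover have "\<bar>l\<bar>/2 * (2 * (\<bar>B\<bar> + 1) / \<bar>l\<bar>) = \<bar>B\<bar> + 1" using l0 by simp
  ultimately show False by simp
qed

lemma acd_integral_zero:
  assumes d: "acd \<rho> \<phi>" and ir: "integrable lborel \<rho>" and ip: "integrable lborel \<phi>"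
  shows "(\<integral>x. \<rho> x \<partial>lborel) = 0"
proof -
  have ind: "integrable lborel (\<lambda>x. indicator A x *\<^sub>R f x)" if "integrable lborel f" "A \<in> sets borel" for A and f :: "real \<Rightarrow> real"
    using integrable_mult_indicator[of A lborel f] that by simp
  have r1: "set_integrable lborel {0..} \<rho>" and r2: "set_integrable lborel {..0} \<rho>"
    unfolding set_integrable_def using ind[OF ir] by auto
  have p1: "set_integrable lborel {0..} \<phi>" and p2: "set_integrable lborel {..0} \<phi>"
    unfolding set_integrable_def using ind[OF ip] by auto
  have z1: "\<phi> 0 + (LINT x:{0..}|lborel. \<rho> x) = 0"
    by (rule lim_integrable_zero_top[OF p1 acd_lim_top[OF d r1]])
  have z2: "\<phi> 0 - (LINT x:{..0}|lborel. \<rho> x) = 0"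
    by (rule lim_integrable_zero_bot[OF p2 acd_lim_bot[OF d r2]])
  have "(LINT x:({..0} \<union> {0..})|lborel. \<rho> x) = (LINT x:{..0}|lborel. \<rho> x) + (LINT x:{0..}|lborel. \<rho> x)"
    by (rule set_integral_Un_AE[OF _ _ _ r2 r1]) (auto intro: AE_mp[OF AE_lborel_singleton[of 0]])
  moreover have "{..0} \<union> {0..} = (UNIV :: real set)" by auto
  ultimately have "(LINT x:UNIV|lborel. \<rho> x) = 0" using z1 z2 by simp
  then show ?thesis by (simp add: set_lebesgue_integral_def)
qed

lemma Hsp_dH: assumes "f \<in> Hsp w" shows "wderiv w f (dH w f)"
proof -
  from assms obtain g where "wderiv w f g" by (auto simp: Hsp_def)
  then show ?thesis unfolding dH_def by (rule someI[of "wderiv w f"])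
qed

lemma Hsp_cont: "f \<in> Hsp w \<Longrightarrow> continuous_on UNIV f"
  using Hsp_dH[of f w] by (auto simp: wderiv_iff intro: acd_cont)

lemma Hsp_lim:
  assumes w: "w > 0" and d: "wderiv w f g"
  shows "(f \<longlongrightarrow> f 0 + (LINT x:{0..}|lborel. g x)) at_top"
  using d by (auto simp: wderiv_iff intro!: acd_lim_top L2w_atLeast[OF w])

lemma acd_exp: "acd (\<lambda>x. w * exp (w * x)) (\<lambda>x. exp (w * x))"
  by (rule acd_C1) (auto intro!: derivative_eq_intros continuous_intros)

lemma Aop_spec: assumes "f \<in> DA w" shows "Aop w f \<in> Hsp w \<and> wderiv w f (Aop w f)"
proof -
  from assms obtain h where "h \<in> Hsp w \<and> wderiv w f h" by (auto simp: DA_def)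
  then show ?thesis unfolding Aop_def by (rule someI[where P="\<lambda>h. h \<in> Hsp w \<and> wderiv w f h"])
qed

lemma dissip:
  assumes w: "w > 0" and f: "f \<in> DA2 w"
  shows "Gop w f \<in> Hsp w" "Hinner w (Gop w f) f \<le> 0"
proof -
  have fDA: "f \<in> DA w" and aDA: "Aop w f \<in> DA w" using f by (auto simp: DA2_def)
  define a where "a = Aop w f"
  define b where "b = Aop w a"
  have aH: "a \<in> Hsp w" and fa: "wderiv w f a" using Aop_spec[OF fDA] unfolding a_def by auto
  have bH: "b \<in> Hsp w" and ab: "wderiv w a b" using Aop_spec[OF aDA] unfolding b_def a_def by auto
  define c where "c = dH w b"
  have bc: "wderiv w b c" unfolding c_def by (rule Hsp_dH[OF bH])
  have G: "Gop w f = (\<lambda>x. b x - w\<^sup>2 / 2 * f x)" unfolding Gop_def b_def a_def ..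
  have La: "L2w w a" and Lb: "L2w w b" and Lc: "L2w w c"
    using fa ab bc by (auto simp: wderiv_iff)
  have Dfa: "acd a f" and Dab: "acd b a" and Dbc: "acd c b"
    using fa ab bc by (auto simp: wderiv_iff)
  have GD: "wderiv w (Gop w f) (\<lambda>x. c x - w\<^sup>2 / 2 * a x)"
    unfolding G wderiv_iff by (intro conjI L2w_diff[OF Lc L2w_cmult[OF La]] acd_diff[OF Dbc acd_cmult[OF Dfa]])
  then show GH: "Gop w f \<in> Hsp w" unfolding Hsp_def by auto
  define E where "E = (\<lambda>x. exp (w * x))"
  define d where "d = dH w (Gop w f)"
  define e where "e = dH w f"
  have Gd: "wderiv w (Gop w f) d" unfolding d_def by (rule Hsp_dH[OF GH])
  have fe: "wderiv w f e" unfolding e_def by (rule Hsp_dH) (use fDA in \<open>auto simp: DA_def\<close>)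
  have Ld: "L2w w d" and Le: "L2w w e" using Gd fe by (auto simp: wderiv_iff)
  have AEd: "AE x in lborel. d x = c x - w\<^sup>2 / 2 * a x"
    using Gd GD by (auto simp: wderiv_iff intro: acd_unique_AE)
  have AEe: "AE x in lborel. e x = a x"
    using fe fa by (auto simp: wderiv_iff intro: acd_unique_AE)
  have [measurable]: "a \<in> borel_measurable borel" "b \<in> borel_measurable borel" "c \<in> borel_measurable borel"
    "d \<in> borel_measurable borel" "e \<in> borel_measurable borel"
    using La Lb Lc Ld Le by (auto simp: L2w_def)
  have I1: "(\<integral>x. d x * e x * E x \<partial>lborel) = (\<integral>x. (c x - w\<^sup>2 / 2 * a x) * a x * E x \<partial>lborel)"
    using AEd AEe unfolding E_def by (intro integral_cong_AE) (measurable, auto)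
  have iaa: "integrable lborel (\<lambda>x. a x * a x * E x)" unfolding E_def by (rule L2w_prod[OF La La])
  have ica: "integrable lborel (\<lambda>x. c x * a x * E x)" unfolding E_def by (rule L2w_prod[OF Lc La])
  have ibb: "integrable lborel (\<lambda>x. b x * b x * E x)" unfolding E_def by (rule L2w_prod[OF Lb Lb])
  have iba: "integrable lborel (\<lambda>x. b x * a x * E x)" unfolding E_def by (rule L2w_prod[OF Lb La])
  have I2: "(\<integral>x. (c x - w\<^sup>2 / 2 * a x) * a x * E x \<partial>lborel)
      = (\<integral>x. c x * a x * E x \<partial>lborel) - w\<^sup>2 / 2 * (\<integral>x. a x * a x * E x \<partial>lborel)"
  proof -
    have "(\<integral>x. (c x - w\<^sup>2 / 2 * a x) * a x * E x \<partial>lborel)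
       = (\<integral>x. c x * a x * E x - w\<^sup>2 / 2 * (a x * a x * E x) \<partial>lborel)"
      by (simp add: algebra_simps)
    also have "\<dots> = (\<integral>x. c x * a x * E x \<partial>lborel) - (\<integral>x. w\<^sup>2 / 2 * (a x * a x * E x) \<partial>lborel)"
      using ica iaa by (intro Bochner_Integration.integral_diff) auto
    finally show ?thesis by simp
  qed
  \<comment> \<open>integration by parts\<close>
  define \<rho> where "\<rho> = (\<lambda>x. c x * a x * E x + b x * b x * E x - w\<^sup>2 / 2 * (a x * a x * E x))"
  define \<phi> where "\<phi> = (\<lambda>x. b x * (a x * E x) - w / 2 * (a x * (a x * E x)))"
  have DE: "acd (\<lambda>x. w * E x) E" unfolding E_def by (rule acd_exp)
  have DaE: "acd (\<lambda>x. b x * E x + a x * (w * E x)) (\<lambda>x. a x * E x)"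
    by (rule acd_mult[OF Dab DE])
  have D1: "acd (\<lambda>x. c x * (a x * E x) + b x * (b x * E x + a x * (w * E x))) (\<lambda>x. b x * (a x * E x))"
    by (rule acd_mult[OF Dbc DaE])
  have D2: "acd (\<lambda>x. b x * (a x * E x) + a x * (b x * E x + a x * (w * E x))) (\<lambda>x. a x * (a x * E x))"
    by (rule acd_mult[OF Dab DaE])
  have Dr: "acd \<rho> \<phi>"
    using acd_diff[OF D1 acd_cmult[OF D2, of "w/2"]] unfolding \<rho>_def \<phi>_def
    by (rule acd_cong) (simp_all add: algebra_simps power2_eq_square)
  have ir: "integrable lborel \<rho>" unfolding \<rho>_def using ica ibb iaa by auto
  have ip: "integrable lborel \<phi>" unfolding \<phi>_def using iba iaa
    by (auto simp: mult.assoc mult.left_commute)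
  have "(\<integral>x. \<rho> x \<partial>lborel) = 0" by (rule acd_integral_zero[OF Dr ir ip])
  then have I3: "(\<integral>x. c x * a x * E x \<partial>lborel) + (\<integral>x. b x * b x * E x \<partial>lborel) - w\<^sup>2 / 2 * (\<integral>x. a x * a x * E x \<partial>lborel) = 0"
    unfolding \<rho>_def using ica ibb iaa by simp
  have Ibb: "0 \<le> (\<integral>x. b x * b x * E x \<partial>lborel)" unfolding E_def by simp
  have Iterm: "(\<integral>x. d x * e x * E x \<partial>lborel) \<le> 0" using I1 I2 I3 Ibb by linarith
  define L where "L = f 0 + (LINT x:{0..}|lborel. a x)"
  define Lb where "Lb = b 0 + (LINT x:{0..}|lborel. c x)"
  have fL: "(f \<longlongrightarrow> L) at_top" unfolding L_def by (rule Hsp_lim[OF w fa])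
  have bL: "(b \<longlongrightarrow> Lb) at_top" unfolding Lb_def by (rule Hsp_lim[OF w bc])
  have "set_integrable lborel {0..} (\<lambda>x. b x * b x)"
    unfolding set_integrable_def
  proof (rule Bochner_Integration.integrable_bound[OF ibb])
    show "(\<lambda>x. indicator {0..} x *\<^sub>R (b x * b x)) \<in> borel_measurable lborel" by measurable
    show "AE x in lborel. norm (indicator {0..} x *\<^sub>R (b x * b x)) \<le> norm (b x * b x * E x)"
    proof (rule AE_I2)
      fix x
      show "norm (indicator {0..} x *\<^sub>R (b x * b x)) \<le> norm (b x * b x * E x)"
      proof (cases "x \<ge> 0")
        case True
        then have "1 \<le> E x" unfolding E_def using w by simp
        then have "b x * b x * 1 \<le> b x * b x * E x" by (intro mult_left_mono) auto
        then show ?thesis using True by (simp add: abs_mult E_def)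
      qed simp
    qed
  qed
  moreover have "((\<lambda>x. b x * b x) \<longlongrightarrow> Lb * Lb) at_top" by (intro tendsto_mult bL)
  ultimately have "Lb * Lb = 0" by (rule lim_integrable_zero_top)
  then have Lb0: "Lb = 0" by simp
  have "((\<lambda>x. Gop w f x * f x) \<longlongrightarrow> (Lb - w\<^sup>2 / 2 * L) * L) at_top"
    unfolding G by (intro tendsto_intros bL fL)
  then have "Lim at_top (\<lambda>x. Gop w f x * f x) = (Lb - w\<^sup>2 / 2 * L) * L"
    by (intro tendsto_Lim) auto
  also have "\<dots> = - (w\<^sup>2 / 2 * L * L)" using Lb0 by simp
  finally have Llim: "Lim at_top (\<lambda>x. Gop w f x * f x) \<le> 0"
    by (simp add: mult.assoc)
  show "Hinner w (Gop w f) f \<le> 0"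
    unfolding Hinner_def using Llim Iterm unfolding d_def e_def E_def by simp
qed

lemma schur:
  fixes K :: "real \<Rightarrow> real \<Rightarrow> real" and \<psi> :: "real \<Rightarrow> real" and C :: real
  assumes Km[measurable]: "(\<lambda>(x,y). K x y) \<in> borel_measurable (lborel \<Otimes>\<^sub>M lborel)"
    and K0: "\<And>x y. 0 \<le> K x y"
    and Kx: "\<And>x. (\<integral>\<^sup>+y. ennreal (K x y) \<partial>lborel) \<le> ennreal C"
    and Ky: "\<And>y. (\<integral>\<^sup>+x. ennreal (K x y) \<partial>lborel) \<le> ennreal C"
    and \<psi>m[measurable]: "\<psi> \<in> borel_measurable borel"
    and \<psi>2: "integrable lborel (\<lambda>y. (\<psi> y)\<^sup>2)"
    and C: "0 \<le> C"
  shows "integrable lborel (\<lambda>x. (\<integral>y. K x y * \<psi> y \<partial>lborel)\<^sup>2)"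
proof -
  define T where "T = (\<lambda>x. \<integral>y. K x y * \<psi> y \<partial>lborel)"
  have Km': "(\<lambda>p. K (fst p) (snd p)) \<in> borel_measurable (lborel \<Otimes>\<^sub>M lborel)"
    using Km by (simp add: case_prod_beta')
  have Kxm[measurable]: "K x \<in> borel_measurable lborel" for x
    using measurable_Pair2[OF Km', of x] by simp
  have Kym[measurable]: "(\<lambda>x. K x y) \<in> borel_measurable lborel" for y
    using measurable_Pair1[OF Km', of y] by simp
  have Kpm: "(\<lambda>(x,y). K x y * \<psi> y) \<in> borel_measurable (lborel \<Otimes>\<^sub>M lborel)"
    using Km' by measurable
  have Tm[measurable]: "T \<in> borel_measurable lborel"
    unfolding T_def using Kpm by (rule lborel.borel_measurable_lebesgue_integral)
  have pw: "ennreal ((T x)\<^sup>2) \<le> ennreal C * (\<integral>\<^sup>+y. ennreal (K x y * (\<psi> y)\<^sup>2) \<partial>lborel)" for x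
  proof -
    have a: "ennreal \<bar>T x\<bar> \<le> (\<integral>\<^sup>+y. ennreal (K x y * \<bar>\<psi> y\<bar>) \<partial>lborel)"
    proof (cases "integrable lborel (\<lambda>y. K x y * \<psi> y)")
      case True
      have "ennreal \<bar>T x\<bar> = ennreal (norm (T x))" by simp
      also have "\<dots> \<le> (\<integral>\<^sup>+y. norm (K x y * \<psi> y) \<partial>lborel)"
        unfolding T_def by (rule integral_norm_bound_ennreal[OF True])
      also have "\<dots> = (\<integral>\<^sup>+y. ennreal (K x y * \<bar>\<psi> y\<bar>) \<partial>lborel)"
        using K0 by (intro nn_integral_cong) (simp add: abs_mult)
      finally show ?thesis .
    next
      case False
      then have "T x = 0" unfolding T_def by (rule not_integrable_integral_eq)
      then show ?thesis by simp
    qed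
    have b: "(\<integral>\<^sup>+y. ennreal (K x y * \<bar>\<psi> y\<bar>) \<partial>lborel)\<^sup>2
        \<le> (\<integral>\<^sup>+y. ennreal (K x y) \<partial>lborel) * (\<integral>\<^sup>+y. ennreal (K x y * (\<psi> y)\<^sup>2) \<partial>lborel)"
    proof -
      have "(\<integral>\<^sup>+y. ennreal (K x y * \<bar>\<psi> y\<bar>) \<partial>lborel)
          = (\<integral>\<^sup>+y. ennreal (sqrt (K x y)) * ennreal (sqrt (K x y) * \<bar>\<psi> y\<bar>) \<partial>lborel)"
      proof (intro nn_integral_cong)
        fix y
        have eq: "K x y * \<bar>\<psi> y\<bar> = sqrt (K x y) * (sqrt (K x y) * \<bar>\<psi> y\<bar>)"
          using K0[of x y] by (simp add: mult.assoc[symmetric])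
        show "ennreal (K x y * \<bar>\<psi> y\<bar>) = ennreal (sqrt (K x y)) * ennreal (sqrt (K x y) * \<bar>\<psi> y\<bar>)"
          unfolding eq by (rule ennreal_mult) (use K0[of x y] in auto)
      qed
      also have "(\<dots>)\<^sup>2 \<le> (\<integral>\<^sup>+y. (ennreal (sqrt (K x y)))\<^sup>2 \<partial>lborel) * (\<integral>\<^sup>+y. (ennreal (sqrt (K x y) * \<bar>\<psi> y\<bar>))\<^sup>2 \<partial>lborel)"
        by (rule Cauchy_Schwarz_nn_integral) measurable
      also have "(\<integral>\<^sup>+y. (ennreal (sqrt (K x y)))\<^sup>2 \<partial>lborel) = (\<integral>\<^sup>+y. ennreal (K x y) \<partial>lborel)"
      proof (intro nn_integral_cong)
        fix y show "(ennreal (sqrt (K x y)))\<^sup>2 = ennreal (K x y)"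
          using ennreal_power[of "sqrt (K x y)" 2] K0[of x y] by simp
      qed
      also have "(\<integral>\<^sup>+y. (ennreal (sqrt (K x y) * \<bar>\<psi> y\<bar>))\<^sup>2 \<partial>lborel) = (\<integral>\<^sup>+y. ennreal (K x y * (\<psi> y)\<^sup>2) \<partial>lborel)"
      proof (intro nn_integral_cong)
        fix y show "(ennreal (sqrt (K x y) * \<bar>\<psi> y\<bar>))\<^sup>2 = ennreal (K x y * (\<psi> y)\<^sup>2)"
          using ennreal_power[of "sqrt (K x y) * \<bar>\<psi> y\<bar>" 2] K0[of x y] by (simp add: power_mult_distrib)
      qed
      finally show ?thesis .
    qed
    have "ennreal ((T x)\<^sup>2) = (ennreal \<bar>T x\<bar>)\<^sup>2" by (simp add: ennreal_power)
    also have "\<dots> \<le> (\<integral>\<^sup>+y. ennreal (K x y * \<bar>\<psi> y\<bar>) \<partial>lborel)\<^sup>2"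
      using a by (simp add: power2_eq_square mult_mono)
    also have "\<dots> \<le> (\<integral>\<^sup>+y. ennreal (K x y) \<partial>lborel) * (\<integral>\<^sup>+y. ennreal (K x y * (\<psi> y)\<^sup>2) \<partial>lborel)"
      by (rule b)
    also have "\<dots> \<le> ennreal C * (\<integral>\<^sup>+y. ennreal (K x y * (\<psi> y)\<^sup>2) \<partial>lborel)"
      by (intro mult_right_mono Kx) simp
    finally show ?thesis .
  qed
  have "(\<integral>\<^sup>+x. ennreal (norm ((T x)\<^sup>2)) \<partial>lborel) = (\<integral>\<^sup>+x. ennreal ((T x)\<^sup>2) \<partial>lborel)" by simp
  also have "\<dots> \<le> (\<integral>\<^sup>+x. ennreal C * (\<integral>\<^sup>+y. ennreal (K x y * (\<psi> y)\<^sup>2) \<partial>lborel) \<partial>lborel)"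
    by (intro nn_integral_mono pw)
  also have "\<dots> = ennreal C * (\<integral>\<^sup>+x. (\<integral>\<^sup>+y. ennreal (K x y * (\<psi> y)\<^sup>2) \<partial>lborel) \<partial>lborel)"
  proof (rule nn_integral_cmult)
    have "(\<lambda>(x,y). ennreal (K x y * (\<psi> y)\<^sup>2)) \<in> borel_measurable (lborel \<Otimes>\<^sub>M lborel)"
      using Km' by measurable
    then show "(\<lambda>x. \<integral>\<^sup>+y. ennreal (K x y * (\<psi> y)\<^sup>2) \<partial>lborel) \<in> borel_measurable lborel"
      by (rule lborel.borel_measurable_nn_integral)
  qed
  also have "(\<integral>\<^sup>+x. (\<integral>\<^sup>+y. ennreal (K x y * (\<psi> y)\<^sup>2) \<partial>lborel) \<partial>lborel)
      = (\<integral>\<^sup>+y. (\<integral>\<^sup>+x. ennreal (K x y * (\<psi> y)\<^sup>2) \<partial>lborel) \<partial>lborel)"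
  proof (rule lborel_pair.Fubini'[symmetric])
    show "(\<lambda>(x,y). ennreal (K x y * (\<psi> y)\<^sup>2)) \<in> borel_measurable (lborel \<Otimes>\<^sub>M lborel)"
      using Km' by measurable
  qed
  also have "\<dots> \<le> (\<integral>\<^sup>+y. ennreal C * ennreal ((\<psi> y)\<^sup>2) \<partial>lborel)"
  proof (intro nn_integral_mono)
    fix y
    have "(\<integral>\<^sup>+x. ennreal (K x y * (\<psi> y)\<^sup>2) \<partial>lborel) = (\<integral>\<^sup>+x. ennreal (K x y) * ennreal ((\<psi> y)\<^sup>2) \<partial>lborel)"
      using K0 by (intro nn_integral_cong) (simp add: ennreal_mult)
    also have "\<dots> = (\<integral>\<^sup>+x. ennreal (K x y) \<partial>lborel) * ennreal ((\<psi> y)\<^sup>2)"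
      by (rule nn_integral_multc) measurable
    also have "\<dots> \<le> ennreal C * ennreal ((\<psi> y)\<^sup>2)"
      by (intro mult_right_mono Ky) simp
    finally show "(\<integral>\<^sup>+x. ennreal (K x y * (\<psi> y)\<^sup>2) \<partial>lborel) \<le> ennreal C * ennreal ((\<psi> y)\<^sup>2)" .
  qed
  also have "\<dots> = ennreal C * (\<integral>\<^sup>+y. ennreal ((\<psi> y)\<^sup>2) \<partial>lborel)"
    by (rule nn_integral_cmult) measurable
  also have "(\<integral>\<^sup>+y. ennreal ((\<psi> y)\<^sup>2) \<partial>lborel) = ennreal (\<integral>y. (\<psi> y)\<^sup>2 \<partial>lborel)"
    by (rule nn_integral_eq_integral[OF \<psi>2]) simp
  finally have le: "(\<integral>\<^sup>+x. ennreal (norm ((T x)\<^sup>2)) \<partial>lborel) \<le> ennreal C * (ennreal C * ennreal (\<integral>y. (\<psi> y)\<^sup>2 \<partial>lborel))"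
    by (simp add: mult_left_mono)
  have fin: "(\<integral>\<^sup>+x. ennreal (norm ((T x)\<^sup>2)) \<partial>lborel) < \<infinity>"
    by (rule le_less_trans[OF le]) (simp add: ennreal_mult_less_top)
  have "integrable lborel (\<lambda>x. (T x)\<^sup>2)" by (rule integrableI_bounded[OF _ fin]) measurable
  then show ?thesis by (simp add: T_def)
qed

lemma si_atMost:
  fixes c :: real and \<psi> :: "real \<Rightarrow> real"
  assumes c: "c > 0" and \<psi>m[measurable]: "\<psi> \<in> borel_measurable borel" and \<psi>2: "integrable lborel (\<lambda>y. (\<psi> y)\<^sup>2)"
  shows "set_integrable lborel {..x} (\<lambda>y. exp (c*y) * \<psi> y)"
proof -
  have ie: "integrable lborel (\<lambda>y. indicator {..x} y *\<^sub>R exp ((2*c)*y))"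
    using exp_atMost_integrable(1)[of "2*c" x] c unfolding set_integrable_def by simp
  show ?thesis unfolding set_integrable_def
  proof (rule Bochner_Integration.integrable_bound[where f="\<lambda>y. indicator {..x} y *\<^sub>R exp ((2*c)*y) + (\<psi> y)\<^sup>2"])
    show "integrable lborel (\<lambda>y. indicator {..x} y *\<^sub>R exp ((2*c)*y) + (\<psi> y)\<^sup>2)"
      using ie \<psi>2 by (rule Bochner_Integration.integrable_add)
    show "(\<lambda>y. indicator {..x} y *\<^sub>R (exp (c*y) * \<psi> y)) \<in> borel_measurable lborel" by measurable
    show "AE y in lborel. norm (indicator {..x} y *\<^sub>R (exp (c*y) * \<psi> y)) \<le> norm (indicator {..x} y *\<^sub>R exp ((2*c)*y) + (\<psi> y)\<^sup>2)"
    proof (rule AE_I2)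
      fix y
      have h1: "2 * exp (c*y) * \<bar>\<psi> y\<bar> \<le> (exp (c*y))\<^sup>2 + (\<bar>\<psi> y\<bar>)\<^sup>2" by (rule sum_squares_bound)
      have h2: "(exp (c*y))\<^sup>2 = exp ((2*c)*y)" by (simp add: power2_eq_square flip: exp_add)
      have h3: "0 \<le> exp (c*y) * \<bar>\<psi> y\<bar>" by simp
      have h5: "2 * exp (c*y) * \<bar>\<psi> y\<bar> = 2 * (exp (c*y) * \<bar>\<psi> y\<bar>)" by simp
      have h6: "(\<bar>\<psi> y\<bar>)\<^sup>2 = (\<psi> y)\<^sup>2" by simp
      have h4: "exp (c*y) * \<bar>\<psi> y\<bar> \<le> exp ((2*c)*y) + (\<psi> y)\<^sup>2" using h1 h2 h3 h5 h6 by linarith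
      show "norm (indicator {..x} y *\<^sub>R (exp (c*y) * \<psi> y)) \<le> norm (indicator {..x} y *\<^sub>R exp ((2*c)*y) + (\<psi> y)\<^sup>2)"
        using h4 by (auto simp: abs_mult split: split_indicator)
    qed
  qed
qed

lemma si_atLeast:
  fixes c :: real and \<psi> :: "real \<Rightarrow> real"
  assumes c: "c > 0" and \<psi>m[measurable]: "\<psi> \<in> borel_measurable borel" and \<psi>2: "integrable lborel (\<lambda>y. (\<psi> y)\<^sup>2)"
  shows "set_integrable lborel {x..} (\<lambda>y. exp (-c*y) * \<psi> y)"
proof -
  have ie: "integrable lborel (\<lambda>y. indicator {x..} y *\<^sub>R exp (-(2*c)*y))"
    using exp_atLeast_integrable(1)[of "2*c" x] c unfolding set_integrable_def by simp
  show ?thesis unfolding set_integrable_def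
  proof (rule Bochner_Integration.integrable_bound[where f="\<lambda>y. indicator {x..} y *\<^sub>R exp (-(2*c)*y) + (\<psi> y)\<^sup>2"])
    show "integrable lborel (\<lambda>y. indicator {x..} y *\<^sub>R exp (-(2*c)*y) + (\<psi> y)\<^sup>2)"
      using ie \<psi>2 by (rule Bochner_Integration.integrable_add)
    show "(\<lambda>y. indicator {x..} y *\<^sub>R (exp (-c*y) * \<psi> y)) \<in> borel_measurable lborel" by measurable
    show "AE y in lborel. norm (indicator {x..} y *\<^sub>R (exp (-c*y) * \<psi> y)) \<le> norm (indicator {x..} y *\<^sub>R exp (-(2*c)*y) + (\<psi> y)\<^sup>2)"
    proof (rule AE_I2)
      fix y
      have h1: "2 * exp (-c*y) * \<bar>\<psi> y\<bar> \<le> (exp (-c*y))\<^sup>2 + (\<bar>\<psi> y\<bar>)\<^sup>2" by (rule sum_squares_bound)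
      have h2: "(exp (-c*y))\<^sup>2 = exp (-(2*c)*y)" by (simp add: power2_eq_square flip: exp_add)
      have h3: "0 \<le> exp (-c*y) * \<bar>\<psi> y\<bar>" by simp
      have h5: "2 * exp (-c*y) * \<bar>\<psi> y\<bar> = 2 * (exp (-c*y) * \<bar>\<psi> y\<bar>)" by simp
      have h6: "(\<bar>\<psi> y\<bar>)\<^sup>2 = (\<psi> y)\<^sup>2" by simp
      have h4: "exp (-c*y) * \<bar>\<psi> y\<bar> \<le> exp (-(2*c)*y) + (\<psi> y)\<^sup>2" using h1 h2 h3 h5 h6 by linarith
      show "norm (indicator {x..} y *\<^sub>R (exp (-c*y) * \<psi> y)) \<le> norm (indicator {x..} y *\<^sub>R exp (-(2*c)*y) + (\<psi> y)\<^sup>2)"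
        using h4 by (auto simp: abs_mult split: split_indicator)
    qed
  qed
qed

lemma acd_atMost_integral:
  fixes f :: "real \<Rightarrow> real"
  assumes si: "\<And>x. set_integrable lborel {..x} f"
  shows "acd f (\<lambda>x. LINT y:{..x}|lborel. f y)"
  unfolding acd_def
proof (intro allI impI conjI)
  fix a b :: real assume ab: "a \<le> b"
  show sab: "set_integrable lborel {a..b} f" by (rule set_integrable_subset[OF si[of b]]) auto
  have s2: "set_integrable lborel {a<..b} f" by (rule set_integrable_subset[OF si[of b]]) auto
  have "(LINT y:{..b}|lborel. f y) = (LINT y:({..a} \<union> {a<..b})|lborel. f y)"
  proof -
    have "{..b} = {..a} \<union> {a<..b}" using ab by auto
    then show ?thesis by simp
  qed
  also have "\<dots> = (LINT y:{..a}|lborel. f y) + (LINT y:{a<..b}|lborel. f y)"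
    by (rule set_integral_Un[OF _ si s2]) auto
  also have "(LINT y:{a<..b}|lborel. f y) = (LINT y:{a..b}|lborel. f y)"
  proof (rule set_integral_cong_set)
    show "set_borel_measurable lborel {a..b} f" "set_borel_measurable lborel {a<..b} f"
      using sab s2 unfolding set_integrable_def set_borel_measurable_def by auto
    show "AE x in lborel. (x \<in> {a..b}) = (x \<in> {a<..b})"
      using AE_lborel_singleton[of a] by eventually_elim (use ab in auto)
  qed
  finally show "(LINT y:{..b}|lborel. f y) - (LINT y:{..a}|lborel. f y) = (LINT y:{a..b}|lborel. f y)"
    by simp
qed

lemma acd_atLeast_integral:
  fixes f :: "real \<Rightarrow> real"
  assumes si: "\<And>x. set_integrable lborel {x..} f"
  shows "acd (\<lambda>x. - f x) (\<lambda>x. LINT y:{x..}|lborel. f y)"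
  unfolding acd_def
proof (intro allI impI conjI)
  fix a b :: real assume ab: "a \<le> b"
  have sab: "set_integrable lborel {a..b} f" by (rule set_integrable_subset[OF si[of a]]) auto
  then show "set_integrable lborel {a..b} (\<lambda>x. - f x)" by (simp add: set_integrable_def)
  have s2: "set_integrable lborel {a..<b} f" by (rule set_integrable_subset[OF si[of a]]) auto
  have "(LINT y:{a..}|lborel. f y) = (LINT y:({a..<b} \<union> {b..})|lborel. f y)"
  proof -
    have "{a..} = {a..<b} \<union> {b..}" using ab by auto
    then show ?thesis by simp
  qed
  also have "\<dots> = (LINT y:{a..<b}|lborel. f y) + (LINT y:{b..}|lborel. f y)"
    by (rule set_integral_Un[OF _ s2 si]) auto
  also have "(LINT y:{a..<b}|lborel. f y) = (LINT y:{a..b}|lborel. f y)"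
  proof (rule set_integral_cong_set)
    show "set_borel_measurable lborel {a..b} f" "set_borel_measurable lborel {a..<b} f"
      using sab s2 unfolding set_integrable_def set_borel_measurable_def by auto
    show "AE x in lborel. (x \<in> {a..b}) = (x \<in> {a..<b})"
      using AE_lborel_singleton[of b] by eventually_elim (use ab in auto)
  qed
  moreover have "(LINT y:{a..b}|lborel. - f y) = - (LINT y:{a..b}|lborel. f y)"
    by (simp add: set_lebesgue_integral_def)
  ultimately show "(LINT y:{b..}|lborel. f y) - (LINT y:{a..}|lborel. f y) = (LINT y:{a..b}|lborel. - f y)"
    by simp
qed

lemma ennreal_exp_split: "ennreal (exp (a + b)) = ennreal (exp a) * ennreal (exp b)"
  by (simp add: exp_add ennreal_mult)

lemma A_L2w:
  fixes w k \<alpha> :: real and g :: "real \<Rightarrow> real"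
  assumes a: "\<alpha> > 0" "\<alpha> = k - w/2" and g: "L2w w g"
  shows "L2w w (\<lambda>x. exp (-k*x) * (LINT y:{..x}|lborel. exp (k*y) * g y))"
proof -
  define \<psi> where "\<psi> = (\<lambda>y. g y * exp (w*y/2))"
  have [measurable]: "g \<in> borel_measurable borel" using g by (simp add: L2w_def)
  have \<psi>m[measurable]: "\<psi> \<in> borel_measurable borel" unfolding \<psi>_def by measurable
  have \<psi>sq: "(\<psi> y)\<^sup>2 = (g y)\<^sup>2 * exp (w * y)" for y
    unfolding \<psi>_def by (simp add: power_mult_distrib power2_eq_square flip: exp_add)
  have \<psi>2: "integrable lborel (\<lambda>y. (\<psi> y)\<^sup>2)" unfolding \<psi>sq using g by (simp add: L2w_def)
  have ek: "exp (k*y) * g y = exp (\<alpha>*y) * \<psi> y" for y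
  proof -
    have "\<alpha>*y + w*y/2 = k*y" by (simp add: a(2) algebra_simps)
    then have e: "exp (\<alpha>*y) * exp (w*y/2) = exp (k*y)" by (simp flip: exp_add)
    show ?thesis unfolding \<psi>_def by (simp only: e[symmetric] mult_ac)
  qed
  have si: "set_integrable lborel {..x} (\<lambda>y. exp (k*y) * g y)" for x
    unfolding ek by (rule si_atMost[OF a(1) \<psi>m \<psi>2])
  define P where "P = (\<lambda>x. LINT y:{..x}|lborel. exp (k*y) * g y)"
  have dP: "acd (\<lambda>y. exp (k*y) * g y) P" unfolding P_def by (rule acd_atMost_integral[OF si])
  have [measurable]: "P \<in> borel_measurable borel" by (rule acd_measurable[OF dP])
  define K where "K = (\<lambda>x y. indicator {..x} y * exp (-\<alpha>*(x-y)) :: real)"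
  have Km: "(\<lambda>(x,y). K x y) \<in> borel_measurable (lborel \<Otimes>\<^sub>M lborel)"
    unfolding K_def indicator_def atMost_iff by measurable
  have K0: "0 \<le> K x y" for x y unfolding K_def by simp
  have Kx: "(\<integral>\<^sup>+y. ennreal (K x y) \<partial>lborel) \<le> ennreal (1/\<alpha>)" for x
  proof -
    have "(\<integral>\<^sup>+y. ennreal (K x y) \<partial>lborel) = (\<integral>\<^sup>+y. ennreal (exp (-\<alpha>*x)) * (ennreal (exp (\<alpha>*y)) * indicator {..x} y) \<partial>lborel)"
      unfolding K_def by (intro nn_integral_cong) (simp add: algebra_simps ennreal_exp_split[symmetric] split: split_indicator)
    also have "\<dots> = ennreal (exp (-\<alpha>*x)) * (\<integral>\<^sup>+y. ennreal (exp (\<alpha>*y)) * indicator {..x} y \<partial>lborel)"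
      by (rule nn_integral_cmult) measurable
    also have "\<dots> = ennreal (exp (-\<alpha>*x)) * ennreal (exp (\<alpha>*x) / \<alpha>)" using nn_exp_atMost[OF a(1)] by simp
    also have "\<dots> = ennreal (1/\<alpha>)" using a by (simp add: ennreal_mult[symmetric] exp_minus field_simps)
    finally show ?thesis by simp
  qed
  have Ky: "(\<integral>\<^sup>+x. ennreal (K x y) \<partial>lborel) \<le> ennreal (1/\<alpha>)" for y
  proof -
    have "(\<integral>\<^sup>+x. ennreal (K x y) \<partial>lborel) = (\<integral>\<^sup>+x. ennreal (exp (\<alpha>*y)) * (ennreal (exp (-\<alpha>*x)) * indicator {y..} x) \<partial>lborel)"
      unfolding K_def by (intro nn_integral_cong) (simp add: algebra_simps ennreal_exp_split[symmetric] split: split_indicator)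
    also have "\<dots> = ennreal (exp (\<alpha>*y)) * (\<integral>\<^sup>+x. ennreal (exp (-\<alpha>*x)) * indicator {y..} x \<partial>lborel)"
      by (rule nn_integral_cmult) measurable
    also have "\<dots> = ennreal (exp (\<alpha>*y)) * ennreal (exp (-\<alpha>*y) / \<alpha>)" using nn_exp_atLeast[OF a(1)] by simp
    also have "\<dots> = ennreal (1/\<alpha>)" using a by (simp add: ennreal_mult[symmetric] exp_minus field_simps)
    finally show ?thesis by simp
  qed
  have S: "integrable lborel (\<lambda>x. (\<integral>y. K x y * \<psi> y \<partial>lborel)\<^sup>2)"
    by (rule schur[OF Km K0 Kx Ky \<psi>m \<psi>2]) (use a in simp)
  have eq: "(exp (-k*x) * P x)\<^sup>2 * exp (w*x) = (\<integral>y. K x y * \<psi> y \<partial>lborel)\<^sup>2" for x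
  proof -
    have "exp (-k*x) * P x * exp (w*x/2) = exp (-\<alpha>*x) * (\<integral>y. indicator {..x} y *\<^sub>R (exp (k*y) * g y) \<partial>lborel)"
      unfolding P_def set_lebesgue_integral_def by (simp add: a(2) algebra_simps flip: exp_add)
    also have "\<dots> = (\<integral>y. exp (-\<alpha>*x) * (indicator {..x} y *\<^sub>R (exp (k*y) * g y)) \<partial>lborel)"
      by simp
    also have "\<dots> = (\<integral>y. K x y * \<psi> y \<partial>lborel)"
    proof (intro Bochner_Integration.integral_cong refl)
      fix y
      have "-\<alpha>*x + k*y = -\<alpha>*(x-y) + w*y/2" by (simp add: a(2) field_simps)
      then have "exp (-\<alpha>*x) * exp (k*y) = exp (-\<alpha>*(x-y)) * exp (w*y/2)" by (simp flip: exp_add)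
      then show "exp (-\<alpha>*x) * (indicator {..x} y *\<^sub>R (exp (k*y) * g y)) = K x y * \<psi> y"
        unfolding K_def \<psi>_def by (simp add: mult_ac)
    qed
    finally have e1: "exp (-k*x) * P x * exp (w*x/2) = (\<integral>y. K x y * \<psi> y \<partial>lborel)" .
    have "(exp (-k*x) * P x)\<^sup>2 * exp (w*x) = (exp (-k*x) * P x * exp (w*x/2))\<^sup>2"
      by (simp add: power_mult_distrib power2_eq_square[of "exp (w*x/2)"] flip: exp_add)
    then show ?thesis unfolding e1 .
  qed
  have m: "(\<lambda>x. exp (-k*x) * P x) \<in> borel_measurable borel" by measurable
  have i: "integrable lborel (\<lambda>x. (exp (-k*x) * P x)\<^sup>2 * exp (w*x))"
    unfolding eq by (rule S)
  have "L2w w (\<lambda>x. exp (-k*x) * P x)" unfolding L2w_def using m i by simp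
  then show ?thesis unfolding P_def .
qed

lemma B_L2w:
  fixes w k \<alpha> :: real and g :: "real \<Rightarrow> real"
  assumes a: "\<alpha> > 0" "\<alpha> = k + w/2" and g: "L2w w g"
  shows "L2w w (\<lambda>x. exp (k*x) * (LINT y:{x..}|lborel. exp (-k*y) * g y))"
proof -
  define \<psi> where "\<psi> = (\<lambda>y. g y * exp (w*y/2))"
  have [measurable]: "g \<in> borel_measurable borel" using g by (simp add: L2w_def)
  have \<psi>m[measurable]: "\<psi> \<in> borel_measurable borel" unfolding \<psi>_def by measurable
  have \<psi>sq: "(\<psi> y)\<^sup>2 = (g y)\<^sup>2 * exp (w * y)" for y
    unfolding \<psi>_def by (simp add: power_mult_distrib power2_eq_square flip: exp_add)
  have \<psi>2: "integrable lborel (\<lambda>y. (\<psi> y)\<^sup>2)" unfolding \<psi>sq using g by (simp add: L2w_def)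
  have ek: "exp (-k*y) * g y = exp (-\<alpha>*y) * \<psi> y" for y
  proof -
    have "-\<alpha>*y + w*y/2 = -k*y" by (simp add: a(2) algebra_simps)
    then have e: "exp (-\<alpha>*y) * exp (w*y/2) = exp (-k*y)" by (simp flip: exp_add)
    show ?thesis unfolding \<psi>_def e[symmetric] by (simp only: mult_ac)
  qed
  have si: "set_integrable lborel {x..} (\<lambda>y. exp (-k*y) * g y)" for x
    unfolding ek by (rule si_atLeast[OF a(1) \<psi>m \<psi>2])
  define P where "P = (\<lambda>x. LINT y:{x..}|lborel. exp (-k*y) * g y)"
  have dP: "acd (\<lambda>y. - (exp (-k*y) * g y)) P" unfolding P_def by (rule acd_atLeast_integral[OF si])
  have [measurable]: "P \<in> borel_measurable borel" by (rule acd_measurable[OF dP])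
  define K where "K = (\<lambda>x y. indicator {x..} y * exp (-\<alpha>*(y-x)) :: real)"
  have Km: "(\<lambda>(x,y). K x y) \<in> borel_measurable (lborel \<Otimes>\<^sub>M lborel)"
    unfolding K_def indicator_def atLeast_iff by measurable
  have K0: "0 \<le> K x y" for x y unfolding K_def by simp
  have Kx: "(\<integral>\<^sup>+y. ennreal (K x y) \<partial>lborel) \<le> ennreal (1/\<alpha>)" for x
  proof -
    have "(\<integral>\<^sup>+y. ennreal (K x y) \<partial>lborel) = (\<integral>\<^sup>+y. ennreal (exp (\<alpha>*x)) * (ennreal (exp (-\<alpha>*y)) * indicator {x..} y) \<partial>lborel)"
      unfolding K_def by (intro nn_integral_cong) (simp add: algebra_simps ennreal_exp_split[symmetric] split: split_indicator)
    also have "\<dots> = ennreal (exp (\<alpha>*x)) * (\<integral>\<^sup>+y. ennreal (exp (-\<alpha>*y)) * indicator {x..} y \<partial>lborel)"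
      by (rule nn_integral_cmult) measurable
    also have "\<dots> = ennreal (exp (\<alpha>*x)) * ennreal (exp (-\<alpha>*x) / \<alpha>)" using nn_exp_atLeast[OF a(1)] by simp
    also have "\<dots> = ennreal (1/\<alpha>)" using a by (simp add: ennreal_mult[symmetric] exp_minus field_simps)
    finally show ?thesis by simp
  qed
  have Ky: "(\<integral>\<^sup>+x. ennreal (K x y) \<partial>lborel) \<le> ennreal (1/\<alpha>)" for y
  proof -
    have "(\<integral>\<^sup>+x. ennreal (K x y) \<partial>lborel) = (\<integral>\<^sup>+x. ennreal (exp (-\<alpha>*y)) * (ennreal (exp (\<alpha>*x)) * indicator {..y} x) \<partial>lborel)"
      unfolding K_def by (intro nn_integral_cong) (simp add: algebra_simps ennreal_exp_split[symmetric] split: split_indicator)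
    also have "\<dots> = ennreal (exp (-\<alpha>*y)) * (\<integral>\<^sup>+x. ennreal (exp (\<alpha>*x)) * indicator {..y} x \<partial>lborel)"
      by (rule nn_integral_cmult) measurable
    also have "\<dots> = ennreal (exp (-\<alpha>*y)) * ennreal (exp (\<alpha>*y) / \<alpha>)" using nn_exp_atMost[OF a(1)] by simp
    also have "\<dots> = ennreal (1/\<alpha>)" using a by (simp add: ennreal_mult[symmetric] exp_minus field_simps)
    finally show ?thesis by simp
  qed
  have S: "integrable lborel (\<lambda>x. (\<integral>y. K x y * \<psi> y \<partial>lborel)\<^sup>2)"
    by (rule schur[OF Km K0 Kx Ky \<psi>m \<psi>2]) (use a in simp)
  have eq: "(exp (k*x) * P x)\<^sup>2 * exp (w*x) = (\<integral>y. K x y * \<psi> y \<partial>lborel)\<^sup>2" for x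
  proof -
    have "exp (k*x) * P x * exp (w*x/2) = exp (\<alpha>*x) * (\<integral>y. indicator {x..} y *\<^sub>R (exp (-k*y) * g y) \<partial>lborel)"
      unfolding P_def set_lebesgue_integral_def by (simp add: a(2) algebra_simps flip: exp_add)
    also have "\<dots> = (\<integral>y. exp (\<alpha>*x) * (indicator {x..} y *\<^sub>R (exp (-k*y) * g y)) \<partial>lborel)"
      by simp
    also have "\<dots> = (\<integral>y. K x y * \<psi> y \<partial>lborel)"
    proof (intro Bochner_Integration.integral_cong refl)
      fix y
      have "\<alpha>*x + -k*y = -\<alpha>*(y-x) + w*y/2" by (simp add: a(2) field_simps)
      then have "exp (\<alpha>*x) * exp (-k*y) = exp (-\<alpha>*(y-x)) * exp (w*y/2)" by (simp flip: exp_add)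
      then show "exp (\<alpha>*x) * (indicator {x..} y *\<^sub>R (exp (-k*y) * g y)) = K x y * \<psi> y"
        unfolding K_def \<psi>_def by (simp add: mult_ac)
    qed
    finally have e1: "exp (k*x) * P x * exp (w*x/2) = (\<integral>y. K x y * \<psi> y \<partial>lborel)" .
    have "(exp (k*x) * P x)\<^sup>2 * exp (w*x) = (exp (k*x) * P x * exp (w*x/2))\<^sup>2"
      by (simp add: power_mult_distrib power2_eq_square[of "exp (w*x/2)"] flip: exp_add)
    then show ?thesis unfolding e1 .
  qed
  have m: "(\<lambda>x. exp (k*x) * P x) \<in> borel_measurable borel" by measurable
  have i: "integrable lborel (\<lambda>x. (exp (k*x) * P x)\<^sup>2 * exp (w*x))"
    unfolding eq by (rule S)
  have "L2w w (\<lambda>x. exp (k*x) * P x)" unfolding L2w_def using m i by simp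
  then show ?thesis unfolding P_def .
qed

lemma surj:
  assumes w: "w > 0" and hH: "h \<in> Hsp w"
  shows "\<exists>f\<in>DA2 w. (\<lambda>x. f x - Gop w f x) = h"
proof -
  define g where "g = dH w h"
  have hg: "wderiv w h g" unfolding g_def by (rule Hsp_dH[OF hH])
  have Lg: "L2w w g" and dh: "acd g h" using hg by (auto simp: wderiv_iff)
  define k where "k = sqrt (1 + w\<^sup>2/2)"
  have kpos: "k > 0" unfolding k_def by (simp add: add_pos_nonneg)
  have k2: "k\<^sup>2 = 1 + w\<^sup>2/2" unfolding k_def by (simp add: add_nonneg_nonneg)
  have h4: "(w/2)\<^sup>2 = w\<^sup>2/4" by (simp add: power_divide)
  have "0 \<le> w\<^sup>2" by simp
  then have "(w/2)\<^sup>2 < 1 + w\<^sup>2/2" unfolding h4 by linarith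
  then have kw: "w/2 < k" unfolding k_def by (rule real_less_rsqrt)
  have [measurable]: "g \<in> borel_measurable borel" using Lg by (simp add: L2w_def)
  define \<psi> where "\<psi> = (\<lambda>y. g y * exp (w*y/2))"
  have \<psi>m[measurable]: "\<psi> \<in> borel_measurable borel" unfolding \<psi>_def by measurable
  have \<psi>sq: "(\<psi> y)\<^sup>2 = (g y)\<^sup>2 * exp (w * y)" for y
    unfolding \<psi>_def by (simp add: power_mult_distrib power2_eq_square flip: exp_add)
  have \<psi>2: "integrable lborel (\<lambda>y. (\<psi> y)\<^sup>2)" unfolding \<psi>sq using Lg by (simp add: L2w_def)
  have ek1: "exp (k*y) * g y = exp ((k - w/2)*y) * \<psi> y" for y
  proof -
    have "(k - w/2)*y + w*y/2 = k*y" by (simp add: algebra_simps)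
    then have e: "exp ((k - w/2)*y) * exp (w*y/2) = exp (k*y)" by (simp flip: exp_add)
    show ?thesis unfolding \<psi>_def e[symmetric] by (simp only: mult_ac)
  qed
  have ek2: "exp (-k*y) * g y = exp (-(k + w/2)*y) * \<psi> y" for y
  proof -
    have "-(k + w/2)*y + w*y/2 = -k*y" by (simp add: algebra_simps)
    then have e: "exp (-(k + w/2)*y) * exp (w*y/2) = exp (-k*y)" by (simp flip: exp_add)
    show ?thesis unfolding \<psi>_def e[symmetric] by (simp only: mult_ac)
  qed
  have si1: "set_integrable lborel {..x} (\<lambda>y. exp (k*y) * g y)" for x
    unfolding ek1 by (rule si_atMost[OF _ \<psi>m \<psi>2]) (use kw in simp)
  have si2: "set_integrable lborel {x..} (\<lambda>y. exp (-k*y) * g y)" for x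
    unfolding ek2 by (rule si_atLeast[OF _ \<psi>m \<psi>2]) (use kw w in simp)
  define P where "P = (\<lambda>x. LINT y:{..x}|lborel. exp (k*y) * g y)"
  define Q where "Q = (\<lambda>x. LINT y:{x..}|lborel. exp (-k*y) * g y)"
  have dP: "acd (\<lambda>y. exp (k*y) * g y) P" unfolding P_def by (rule acd_atMost_integral[OF si1])
  have dQ: "acd (\<lambda>y. - (exp (-k*y) * g y)) Q" unfolding Q_def by (rule acd_atLeast_integral[OF si2])
  have dEm: "acd (\<lambda>x. -k * exp (-k*x)) (\<lambda>x. exp (-k*x))"
    by (rule acd_C1) (auto intro!: derivative_eq_intros continuous_intros)
  have dEp: "acd (\<lambda>x. k * exp (k*x)) (\<lambda>x. exp (k*x))"
    by (rule acd_C1) (auto intro!: derivative_eq_intros continuous_intros)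
  define A where "A = (\<lambda>x. exp (-k*x) * P x)"
  define B where "B = (\<lambda>x. exp (k*x) * Q x)"
  have dA: "acd (\<lambda>x. -k * A x + g x) A"
    using acd_mult[OF dEm dP] unfolding A_def
    by (rule acd_cong) (simp_all add: mult.assoc[symmetric] flip: exp_add)
  have dB: "acd (\<lambda>x. k * B x - g x) B"
    using acd_mult[OF dEp dQ] unfolding B_def
    by (rule acd_cong) (simp_all add: mult.assoc[symmetric] flip: exp_add)
  have LA: "L2w w A" unfolding A_def P_def
    by (rule A_L2w[OF _ _ Lg, of "k - w/2"]) (use kw in simp_all)
  have LB: "L2w w B" unfolding B_def Q_def
    by (rule B_L2w[OF _ _ Lg, of "k + w/2"]) (use kw w in simp_all)
  define u where "u = (\<lambda>x. 1/(2*k) * (A x + B x))"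
  define v where "v = (\<lambda>x. 1/2 * (B x - A x))"
  have du: "acd v u"
    using acd_cmult[OF acd_add[OF dA dB], of "1/(2*k)"] unfolding u_def v_def
    by (rule acd_cong) (use kpos in \<open>simp_all add: field_simps\<close>)
  have dv: "acd (\<lambda>x. k\<^sup>2 * u x - g x) v"
    using acd_cmult[OF acd_diff[OF dB dA], of "1/2"] unfolding u_def v_def
    by (rule acd_cong) (use kpos in \<open>simp_all add: field_simps power2_eq_square\<close>)
  have Lu: "L2w w u" unfolding u_def by (intro L2w_cmult L2w_add LA LB)
  have Lv: "L2w w v" unfolding v_def by (intro L2w_cmult L2w_diff LA LB)
  have Lw: "L2w w (\<lambda>x. k\<^sup>2 * u x - g x)" by (intro L2w_diff L2w_cmult Lu Lg)
  define f where "f = (\<lambda>x. 1/k\<^sup>2 * (h x + v x))"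
  have df: "acd u f"
    using acd_cmult[OF acd_add[OF dh dv], of "1/k\<^sup>2"] unfolding f_def
    by (rule acd_cong) (use kpos in \<open>simp_all add: field_simps\<close>)
  have wfu: "wderiv w f u" using Lu df by (simp add: wderiv_iff)
  have wuv: "wderiv w u v" using Lv du by (simp add: wderiv_iff)
  have wvw: "wderiv w v (\<lambda>x. k\<^sup>2 * u x - g x)" using Lw dv by (simp add: wderiv_iff)
  have fH: "f \<in> Hsp w" and uH: "u \<in> Hsp w" and vH: "v \<in> Hsp w"
    using wfu wuv wvw unfolding Hsp_def by auto
  have fDA: "f \<in> DA w" using fH uH wfu unfolding DA_def by auto
  have uDA: "u \<in> DA w" using uH vH wuv unfolding DA_def by auto
  have Af: "Aop w f = u"
  proof -
    have s: "Aop w f \<in> Hsp w" "wderiv w f (Aop w f)" using Aop_spec[OF fDA] by auto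
    show ?thesis
      by (rule acd_unique_cont) (use s df uH in \<open>auto simp: wderiv_iff intro: Hsp_cont\<close>)
  qed
  have Au: "Aop w u = v"
  proof -
    have s: "Aop w u \<in> Hsp w" "wderiv w u (Aop w u)" using Aop_spec[OF uDA] by auto
    show ?thesis
      by (rule acd_unique_cont) (use s du vH in \<open>auto simp: wderiv_iff intro: Hsp_cont\<close>)
  qed
  have fDA2: "f \<in> DA2 w" unfolding DA2_def using fDA uDA Af by simp
  have "(\<lambda>x. f x - Gop w f x) = h"
  proof
    fix x
    have "f x - Gop w f x = (1 + w\<^sup>2/2) * f x - v x" unfolding Gop_def Af Au by (simp add: algebra_simps)
    also have "\<dots> = k\<^sup>2 * f x - v x" using k2 by simp
    also have "\<dots> = h x" unfolding f_def using kpos by simp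
    finally show "f x - Gop w f x = h x" .
  qed
  then show ?thesis using fDA2 by auto
qed

theorem proposition5p3:
  fixes w :: real
  assumes "w > 0"
  shows "maximal_dissipative (Hsp w) (Hinner w) (DA2 w) (Gop w)"
  unfolding maximal_dissipative_def
proof (intro conjI ballI)
  show "DA2 w \<subseteq> Hsp w" by (auto simp: DA2_def DA_def)
  fix f assume "f \<in> DA2 w"
  then show "Gop w f \<in> Hsp w" "Hinner w (Gop w f) f \<le> 0" using dissip[OF assms] by auto
next
  fix h assume "h \<in> Hsp w"
  then show "\<exists>f\<in>DA2 w. (\<lambda>x. f x - Gop w f x) = h" by (rule surj[OF assms])
qed

end
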